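(* Let $P$ be a $3$-polytope with $\mathrm{InCone}(P)\neq\emptyset$. If $P$ has a $2$-face with an odd number of vertices, then $\dim\mathrm{InCone}(P)\le2$. If $P$ has two $2$-faces, each with an odd number of vertices, that share an edge, then $\dim\mathrm{InCone}(P)=1$, i.e. up to homothety (and translation) $P$ has a unique inscribed polytope with the same normal fan.
   Context: $\mathrm{InCone}(P)$ is the set of polytopes with all vertices on a common sphere and with the same normal fan as $P$, modulo translation; it is an open polyhedral cone (identified with the set of such polytopes whose inscribing sphere is centered at the origin). *)

theory Defs
  imports "HOL-Analysis.Analysis"
begin

definition normal_cone :: "(real^3) set \<Rightarrow> (real^3) set \<Rightarrow> (real^3) set" where
  "normal_cone P F = {c. \<forall>x\<in>F. \<forall>y\<in>P. c \<bullet> y \<le> c \<bullet> x}"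

definition normal_fan :: "(real^3) set \<Rightarrow> (real^3) set set" where
  "normal_fan P = {normal_cone P F | F. F face_of P \<and> F \<noteq> {}}"

text \<open>InCone(P): polytopes with the same normal fan as P whose vertices lie on a common
  sphere centered at the origin (canonical representatives modulo translation).\<close>
definition InCone :: "(real^3) set \<Rightarrow> (real^3) set set" where
  "InCone P = {Q. polytope Q \<and> normal_fan Q = normal_fan P \<and>
      (\<exists>r>0. \<forall>v. v extreme_point_of Q \<longrightarrow> norm v = r)}"

definition support_fun :: "(real^3) set \<Rightarrow> real^3 \<Rightarrow> real" where
  "support_fun Q u = Sup ((\<lambda>x. u \<bullet> x) ` Q)"

definition lin_indep_funs :: "('a \<Rightarrow> real) set \<Rightarrow> bool" where
  "lin_indep_funs S \<longleftrightarrow> finite S \<and>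
     (\<forall>c. (\<forall>x. (\<Sum>f\<in>S. c f * f x) = 0) \<longrightarrow> (\<forall>f\<in>S. c f = 0))"

text \<open>Dimension of InCone(P), via the linear embedding Q \<mapsto> support function of Q
  (Minkowski sum and positive scaling correspond to sum and scaling of support functions):
  the dimension of the linear span of this cone, i.e. the maximal number of linearly
  independent elements.\<close>
definition incone_dim :: "(real^3) set \<Rightarrow> nat" where
  "incone_dim P = Max {card S | S. S \<subseteq> support_fun ` InCone P \<and> lin_indep_funs S}"

definition vertex_count :: "(real^3) set \<Rightarrow> nat" where
  "vertex_count F = card {v. v extreme_point_of F}"

end

theory Submission
  imports Defs
begin

definition edg :: "(real^3) set \<Rightarrow> real^3 \<Rightarrow> real^3 \<Rightarrow> bool" where
  "edg K v w \<longleftrightarrow> v extreme_point_of K \<and> w extreme_point_of K \<and> v \<noteq> w \<and> closed_segment v w face_of K"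

lemma edg_sym: "edg K v w \<Longrightarrow> edg K w v"
  unfolding edg_def by (auto simp: closed_segment_commute)

lemma poly_vert_finite: "polytope (K::(real^3) set) \<Longrightarrow> finite {v. v extreme_point_of K}"
  by (rule finite_polyhedron_extreme_points, rule polytope_imp_polyhedron)

lemma poly_hull: "polytope (K::(real^3) set) \<Longrightarrow> K = convex hull {v. v extreme_point_of K}"
  by (rule Krein_Milman_Minkowski, erule polytope_imp_compact, erule polytope_imp_convex)

lemma hull_bound:
  fixes a :: "real^3"
  assumes "\<And>v. v \<in> V \<Longrightarrow> a \<bullet> v \<le> b" "y \<in> convex hull V"
  shows "a \<bullet> y \<le> b"
proof -
  have "convex hull V \<subseteq> {x. a \<bullet> x \<le> b}"
    by (rule hull_minimal) (use assms(1) convex_halfspace_le in auto)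
  then show ?thesis using assms(2) by auto
qed

lemma poly_bound:
  fixes a :: "real^3"
  assumes "polytope K" "\<And>v. v extreme_point_of K \<Longrightarrow> a \<bullet> v \<le> b" "y \<in> K"
  shows "a \<bullet> y \<le> b"
  using hull_bound[of "{v. v extreme_point_of K}" a b y] assms poly_hull by blast

lemma poly_exposed:
  fixes K F :: "(real^3) set"
  assumes "polytope K" "F face_of K"
  obtains a b where "\<And>x. x \<in> K \<Longrightarrow> a \<bullet> x \<le> b" "F = K \<inter> {x. a \<bullet> x = b}"
proof -
  have "F exposed_face_of K"
    using assms exposed_face_of_polyhedron polytope_imp_polyhedron by blast
  then show ?thesis unfolding exposed_face_of_def using that by blast
qed

lemma vertex_exposed:
  fixes K :: "(real^3) set"
  assumes "polytope K" "v extreme_point_of K"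
  obtains a where "\<And>x. x \<in> K \<Longrightarrow> x \<noteq> v \<Longrightarrow> a \<bullet> x < a \<bullet> v"
proof -
  have "{v} face_of K" using assms face_of_singleton by blast
  then obtain a b where ab: "\<And>x. x \<in> K \<Longrightarrow> a \<bullet> x \<le> b" "{v} = K \<inter> {x. a \<bullet> x = b}"
    using poly_exposed assms by metis
  have "a \<bullet> v = b" using ab by auto
  then show ?thesis using that ab by (metis (mono_tags, lifting) IntI le_less mem_Collect_eq singletonD)
qed

lemma ext_in: "v extreme_point_of K \<Longrightarrow> v \<in> K"
  by (simp add: extreme_point_of_def)


lemma two_sided:
  fixes x1 x2 :: "real^3"
  assumes ind: "\<And>a b. a *\<^sub>R x1 + b *\<^sub>R x2 = 0 \<Longrightarrow> a = 0 \<and> b = 0"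
  obtains b where "b \<bullet> x1 > 0" "b \<bullet> x2 < 0"
proof -
  define P1 where "P1 = (x2 \<bullet> x2) *\<^sub>R x1 - (x1 \<bullet> x2) *\<^sub>R x2"
  define P2 where "P2 = (x1 \<bullet> x1) *\<^sub>R x2 - (x1 \<bullet> x2) *\<^sub>R x1"
  define G where "G = (x1 \<bullet> x1) * (x2 \<bullet> x2) - (x1 \<bullet> x2) * (x1 \<bullet> x2)"
  have x2: "x2 \<noteq> 0" using ind[of 0 1] by auto
  have "P1 \<noteq> 0"
  proof
    assume "P1 = 0"
    then have "(x2 \<bullet> x2) *\<^sub>R x1 + (- (x1 \<bullet> x2)) *\<^sub>R x2 = 0" by (simp add: P1_def)
    then show False using ind x2 by fastforce
  qed
  then have "P1 \<bullet> P1 > 0" by simp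
  moreover have "P1 \<bullet> P1 = (x2 \<bullet> x2) * G"
    by (simp add: P1_def G_def inner_diff_left inner_diff_right inner_commute algebra_simps)
  moreover have "x2 \<bullet> x2 > 0" using x2 by simp
  ultimately have Gpos: "G > 0" by (metis zero_less_mult_pos)
  have "(P1 - P2) \<bullet> x1 = G" "(P1 - P2) \<bullet> x2 = - G"
    by (simp_all add: P1_def P2_def G_def inner_diff_left inner_commute algebra_simps)
  then show ?thesis using Gpos by (intro that[of "P1 - P2"]) auto
qed

lemma two_vertices:
  fixes K :: "(real^3) set"
  assumes K: "polytope K" and v: "v extreme_point_of K" and dm: "aff_dim K \<ge> 2"
  obtains u1 u2 where "u1 extreme_point_of K" "u2 extreme_point_of K"
    "\<And>\<alpha> \<beta>. \<alpha> *\<^sub>R (u1 - v) + \<beta> *\<^sub>R (u2 - v) = 0 \<Longrightarrow> \<alpha> = 0 \<and> \<beta> = 0"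
proof -
  define V where "V = {x. x extreme_point_of K}"
  have KV: "K = convex hull V" unfolding V_def by (rule poly_hull[OF K])
  have "aff_dim K = aff_dim V" using aff_dim_convex_hull[of V] KV by simp
  moreover have "v \<in> affine hull V" using v unfolding V_def by (intro hull_inc) simp
  ultimately have "aff_dim K = int (dim ((+) (- v) ` V))" using aff_dim_eq_dim[of v V] by simp
  then have d2: "dim ((+) (- v) ` V) \<ge> 2" using dm by linarith
  obtain B where B: "B \<subseteq> (+) (- v) ` V" "independent B" "card B = dim ((+) (- v) ` V)"
    by (rule basis_exists)
  have c2: "card B \<ge> 2" using B(3) d2 by simp
  then have "B \<noteq> {}" by auto
  then obtain x1 where x1: "x1 \<in> B" by blast
  have "card (B - {x1}) \<ge> 1" using c2 x1 by (simp add: card_Diff_singleton_if)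
  then have "B - {x1} \<noteq> {}" by (cases "B - {x1} = {}") simp_all
  then obtain x2 where x2: "x2 \<in> B" "x2 \<noteq> x1" by blast
  have ind: "independent {x1, x2}" using B(2) by (rule independent_mono) (use x1 x2 in auto)
  have ind2: "\<forall>c. (\<Sum>z\<in>{x1,x2}. c z *\<^sub>R z) = 0 \<longrightarrow> (\<forall>z\<in>{x1,x2}. c z = 0)"
    using ind[unfolded independent_explicit] by (rule conjunct2)
  have key: "\<alpha> = 0 \<and> \<beta> = 0" if h: "\<alpha> *\<^sub>R x1 + \<beta> *\<^sub>R x2 = 0" for \<alpha> \<beta>
  proof -
    define cc where "cc = (\<lambda>z. if z = x1 then \<alpha> else \<beta>)"
    have "(\<Sum>z\<in>{x1,x2}. cc z *\<^sub>R z) = \<alpha> *\<^sub>R x1 + \<beta> *\<^sub>R x2" using x2(2) by (simp add: cc_def)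
    then have "\<forall>z\<in>{x1,x2}. cc z = 0" using ind2 h by simp
    then show ?thesis using x2(2) by (simp add: cc_def)
  qed
  obtain u1 where u1: "u1 \<in> V" "x1 = - v + u1" using B(1) x1 by auto
  obtain u2 where u2: "u2 \<in> V" "x2 = - v + u2" using B(1) x2 by auto
  have e1: "u1 - v = x1" "u2 - v = x2" using u1 u2 by simp_all
  show ?thesis
    apply (rule that[of u1 u2])
    using u1(1) u2(1) apply (simp_all add: V_def)
    using key unfolding e1 by blast
qed

lemma simplex_step:
  fixes K :: "(real^3) set"
  assumes "polytope K" "v extreme_point_of K" "u extreme_point_of K" "c \<bullet> v < c \<bullet> u"
  shows "\<exists>w. edg K v w \<and> c \<bullet> v < c \<bullet> w"
proof -
  have H: "\<forall>K v c u. nat (aff_dim K + 1) = n \<longrightarrow> polytope K \<longrightarrow> v extreme_point_of K \<longrightarrow>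
     u extreme_point_of K \<longrightarrow> c \<bullet> v < c \<bullet> u \<longrightarrow> (\<exists>w. edg K v w \<and> c \<bullet> v < c \<bullet> w)" for n
  proof (induction n rule: less_induct)
    case (less n)
    show ?case
    proof (intro allI impI)
      fix K :: "(real^3) set" and v c u
      assume n: "nat (aff_dim K + 1) = n" and K: "polytope K" and v: "v extreme_point_of K"
        and u: "u extreme_point_of K" and cu: "c \<bullet> v < c \<bullet> u"
      define V where "V = {x. x extreme_point_of K}"
      have finV: "finite V" using poly_vert_finite[OF K] V_def by simp
      have convK: "convex K" using K polytope_imp_convex by blast
      obtain a where a: "\<And>x. x \<in> K \<Longrightarrow> x \<noteq> v \<Longrightarrow> a \<bullet> x < a \<bullet> v"
        using vertex_exposed[OF K v] by blast
      have nondeg: "\<exists>w. edg K v w \<and> c' \<bullet> v < c' \<bullet> w"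
        if u1: "u1 extreme_point_of K" "c' \<bullet> v < c' \<bullet> u1"
          and u2: "u2 extreme_point_of K" "u2 \<noteq> v" "c' \<bullet> u2 \<le> c' \<bullet> v" for c' u1 u2
      proof -
        define U where "U = {x \<in> V. c' \<bullet> v < c' \<bullet> x}"
        define t where "t x = (a \<bullet> v - a \<bullet> x) / (c' \<bullet> x - c' \<bullet> v)" for x
        have finU: "finite U" using finV U_def by simp
        have u1U: "u1 \<in> U" using u1 U_def V_def by simp
        define ts where "ts = Min (t ` U)"
        have "ts \<in> t ` U" unfolding ts_def using finU u1U by (intro Min_in) auto
        then obtain w where wU: "w \<in> U" and tw: "t w = ts" by auto
        have tsle: "ts \<le> t x" if "x \<in> U" for x unfolding ts_def using finU that by (intro Min_le) auto
        have tpos: "t x > 0" if "x \<in> U" for x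
        proof -
          have "x \<noteq> v" using that U_def by auto
          moreover have "x \<in> K" using that U_def V_def ext_in by auto
          ultimately have "a \<bullet> x < a \<bullet> v" using a by blast
          then show ?thesis using that U_def t_def by (auto intro!: divide_pos_pos)
        qed
        have tspos: "ts > 0" using tpos wU tw by auto
        define d where "d = a + ts *\<^sub>R c'"
        have dV: "d \<bullet> x \<le> d \<bullet> v" if "x \<in> V" for x
        proof (cases "x = v")
          case True then show ?thesis by simp
        next
          case False
          have xK: "x \<in> K" using that V_def ext_in by auto
          have ax: "a \<bullet> x < a \<bullet> v" using a xK False by blast
          show ?thesis
          proof (cases "c' \<bullet> v < c' \<bullet> x")
            case True
            then have "x \<in> U" using that U_def by simp
            then have "ts \<le> (a \<bullet> v - a \<bullet> x) / (c' \<bullet> x - c' \<bullet> v)" using tsle t_def by simp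
            then have "ts * (c' \<bullet> x - c' \<bullet> v) \<le> a \<bullet> v - a \<bullet> x" using True by (simp add: le_divide_eq)
            then show ?thesis by (simp add: d_def inner_add_left algebra_simps)
          next
            case False
            then have "ts * (c' \<bullet> x) \<le> ts * (c' \<bullet> v)" using tspos by (simp add: mult_left_mono)
            then show ?thesis using ax by (simp add: d_def inner_add_left)
          qed
        qed
        have dK: "d \<bullet> y \<le> d \<bullet> v" if "y \<in> K" for y
          using poly_bound[OF K, of d "d \<bullet> v" y] dV V_def that by blast
        define G where "G = K \<inter> {y. d \<bullet> y = d \<bullet> v}"
        have Gface: "G face_of K" unfolding G_def
          by (rule face_of_Int_supporting_hyperplane_le[OF convK]) (use dK in auto)
        have wK: "w extreme_point_of K" using wU U_def V_def by simp
        have cw: "c' \<bullet> v < c' \<bullet> w" using wU U_def by simp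
        have dw: "d \<bullet> w = d \<bullet> v"
        proof -
          have "ts = (a \<bullet> v - a \<bullet> w) / (c' \<bullet> w - c' \<bullet> v)" using tw t_def by simp
          then have "ts * (c' \<bullet> w - c' \<bullet> v) = a \<bullet> v - a \<bullet> w" using cw by simp
          then show ?thesis by (simp add: d_def inner_add_left algebra_simps)
        qed
        have vG: "v \<in> G" using G_def ext_in[OF v] by simp
        have wG: "w \<in> G" using G_def ext_in[OF wK] dw by simp
        have u2G: "u2 \<notin> G"
        proof
          assume u2G: "u2 \<in> G"
          have "a \<bullet> u2 < a \<bullet> v" using a u2 ext_in by blast
          moreover have "ts * (c' \<bullet> u2) \<le> ts * (c' \<bullet> v)" using tspos u2 by (simp add: mult_left_mono)
          ultimately have "d \<bullet> u2 < d \<bullet> v" by (simp add: d_def inner_add_left)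
          then show False using u2G G_def by simp
        qed
        have GK: "G \<noteq> K" using u2G ext_in[OF u2(1)] by auto
        have affG: "aff_dim G < aff_dim K" using face_of_aff_dim_lt[OF convK Gface GK] .
        have Gpoly: "polytope G" using face_of_polytope_polytope[OF K Gface] .
        have vG': "v extreme_point_of G" using extreme_point_of_face[OF Gface] v vG by blast
        have wG': "w extreme_point_of G" using extreme_point_of_face[OF Gface] wK wG by blast
        have lt: "nat (aff_dim G + 1) < n" using affG n aff_dim_geq[of G] by linarith
        obtain w' where w': "edg G v w'" "c' \<bullet> v < c' \<bullet> w'"
          using less.IH[OF lt, rule_format, OF refl Gpoly vG' wG' cw] by blast
        have "edg K v w'"
          using w'(1) Gface extreme_point_of_face[OF Gface] face_of_trans unfolding edg_def by blast
        then show ?thesis using w'(2) by blast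
      qed
      show "\<exists>w. edg K v w \<and> c \<bullet> v < c \<bullet> w"
      proof (cases "\<exists>u2. u2 extreme_point_of K \<and> u2 \<noteq> v \<and> c \<bullet> u2 \<le> c \<bullet> v")
        case True
        then obtain u2 where "u2 extreme_point_of K" "u2 \<noteq> v" "c \<bullet> u2 \<le> c \<bullet> v" by blast
        then show ?thesis using nondeg[OF u cu] by simp
      next
        case False
        then have allbig: "\<And>x. x extreme_point_of K \<Longrightarrow> x \<noteq> v \<Longrightarrow> c \<bullet> v < c \<bullet> x" by force
        show ?thesis
        proof (cases "aff_dim K \<le> 1")
          case True
          have "collinear K" using True collinear_aff_dim by blast
          have "K \<noteq> {}" using ext_in[OF v] by auto
          then obtain p q where pq: "K = closed_segment p q"
            using compact_convex_collinear_segment[OF _ polytope_imp_compact[OF K] convK \<open>collinear K\<close>] by blast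
          have "v = p \<or> v = q" using v unfolding pq by (rule extreme_point_of_segment[THEN iffD1])
          moreover have "u = p \<or> u = q" using u unfolding pq by (rule extreme_point_of_segment[THEN iffD1])
          moreover have "u \<noteq> v" using cu by auto
          ultimately have "K = closed_segment v u" using pq closed_segment_commute[of p q] by auto
          then have "edg K v u" unfolding edg_def using v u \<open>u \<noteq> v\<close> face_of_refl convK by auto
          then show ?thesis using cu by blast
        next
          case False
          then have "aff_dim K \<ge> 2" by linarith
          then obtain u1 u2 where u12: "u1 extreme_point_of K" "u2 extreme_point_of K"
              "\<And>\<alpha> \<beta>. \<alpha> *\<^sub>R (u1 - v) + \<beta> *\<^sub>R (u2 - v) = 0 \<Longrightarrow> \<alpha> = 0 \<and> \<beta> = 0"
            using two_vertices[OF K v] by blast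
          obtain b where b: "b \<bullet> (u1 - v) > 0" "b \<bullet> (u2 - v) < 0" using two_sided[of "u1 - v" "u2 - v"] u12(3) by blast
          have "u2 \<noteq> v" using b(2) by auto
          obtain w where w: "edg K v w" "b \<bullet> v < b \<bullet> w"
            using nondeg[of u1 b u2] u12 b \<open>u2 \<noteq> v\<close> by (auto simp: inner_diff_right)
          then have "w \<noteq> v" "w extreme_point_of K" unfolding edg_def by auto
          then show ?thesis using w allbig by blast
        qed
      qed
    qed
  qed
  show ?thesis by (rule H[rule_format, OF refl assms])
qed

lemma connected_vertices:
  fixes K :: "(real^3) set"
  assumes K: "polytope K" and v: "v extreme_point_of K" and p: "p extreme_point_of K"
  shows "(edg K)\<^sup>*\<^sup>* v p"
proof -
  obtain c where c: "\<And>x. x \<in> K \<Longrightarrow> x \<noteq> p \<Longrightarrow> c \<bullet> x < c \<bullet> p" using vertex_exposed[OF K p] by blast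
  define V where "V = {x. x extreme_point_of K}"
  have finV: "finite V" using poly_vert_finite[OF K] V_def by simp
  have H: "\<forall>v. card {x\<in>V. c \<bullet> v < c \<bullet> x} = m \<longrightarrow> v extreme_point_of K \<longrightarrow> (edg K)\<^sup>*\<^sup>* v p" for m
  proof (induction m rule: less_induct)
    case (less m)
    show ?case
    proof (intro allI impI)
      fix v assume m: "card {x\<in>V. c \<bullet> v < c \<bullet> x} = m" and v: "v extreme_point_of K"
      show "(edg K)\<^sup>*\<^sup>* v p"
      proof (cases "v = p")
        case True then show ?thesis by simp
      next
        case False
        then have "c \<bullet> v < c \<bullet> p" using c ext_in[OF v] by blast
        then obtain w where w: "edg K v w" "c \<bullet> v < c \<bullet> w" using simplex_step[OF K v p] by blast
        have wK: "w extreme_point_of K" using w unfolding edg_def by blast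
        have sub: "{x\<in>V. c \<bullet> w < c \<bullet> x} \<subset> {x\<in>V. c \<bullet> v < c \<bullet> x}"
          using w(2) wK V_def by auto
        have "card {x\<in>V. c \<bullet> w < c \<bullet> x} < m" using psubset_card_mono[OF _ sub] finV m by simp
        then have "(edg K)\<^sup>*\<^sup>* w p" using less.IH wK by blast
        then show ?thesis using w(1) by (meson converse_rtranclp_into_rtranclp)
      qed
    qed
  qed
  show ?thesis by (rule H[rule_format, OF refl v])
qed

lemma ext_not_open_seg:
  assumes "x extreme_point_of K" "a \<in> K" "b \<in> K"
  shows "x \<notin> open_segment a b"
  using assms unfolding extreme_point_of_def by blast

lemma ext_not_closed_seg:
  assumes "x extreme_point_of K" "a \<in> K" "b \<in> K" "x \<noteq> a" "x \<noteq> b"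
  shows "x \<notin> closed_segment a b"
  using ext_not_open_seg[OF assms(1-3)] assms(4,5) unfolding open_segment_def by blast

lemma no_parallel_aux:
  fixes v wi wj a :: "real^3"
  assumes K: "v \<in> K" and wi: "wi extreme_point_of K" and wj: "wj extreme_point_of K"
    and ne: "wi \<noteq> wj" and ai: "a \<bullet> (wi - v) < 0" and aj: "a \<bullet> (wj - v) < 0"
    and par: "wi - v = t *\<^sub>R (wj - v)"
  shows False
proof -
  have "a \<bullet> (wi - v) = t * (a \<bullet> (wj - v))" using par by simp
  then have tpos: "t > 0"
  proof -
    assume eq: "a \<bullet> (wi - v) = t * (a \<bullet> (wj - v))"
    show "t > 0"
    proof (rule ccontr)
      assume "\<not> t > 0"
      then have "t * (a \<bullet> (wj - v)) \<ge> 0" using aj by (simp add: mult_nonpos_nonpos)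
      then show False using ai eq by linarith
    qed
  qed
  have t1: "t \<noteq> 1" using par ne by auto
  have wiK: "wi \<in> K" "wj \<in> K" using wi wj ext_in by auto
  have vwj: "v \<noteq> wj" using aj by auto
  have vwi: "v \<noteq> wi" using ai by auto
  show False
  proof (cases "t < 1")
    case True
    have "wi = (1 - t) *\<^sub>R v + t *\<^sub>R wj" using par by (simp add: algebra_simps)
    then have "wi \<in> open_segment v wj" using True tpos vwj unfolding in_segment by blast
    then show False using ext_not_open_seg[OF wi K wiK(2)] by blast
  next
    case False
    then have t1': "t > 1" using t1 by simp
    have "wj - v = (1/t) *\<^sub>R (wi - v)" using par tpos by simp
    then have "wj = (1 - 1/t) *\<^sub>R v + (1/t) *\<^sub>R wi" by (simp add: algebra_simps)
    moreover have "0 < 1/t" "1/t < 1" using t1' by auto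
    ultimately have "wj \<in> open_segment v wi" using vwi unfolding in_segment by blast
    then show False using ext_not_open_seg[OF wj K wiK(1)] by blast
  qed
qed

lemma no_parallel:
  fixes v wi wj a :: "real^3"
  assumes K: "v \<in> K" and wi: "wi extreme_point_of K" and wj: "wj extreme_point_of K"
    and ne: "wi \<noteq> wj" and ai: "a \<bullet> (wi - v) < 0" and aj: "a \<bullet> (wj - v) < 0"
    and comb: "\<alpha> *\<^sub>R (wi - v) + \<beta> *\<^sub>R (wj - v) = 0"
  shows "\<alpha> = 0 \<and> \<beta> = 0"
proof (cases "\<alpha> = 0")
  case True
  then have "\<beta> *\<^sub>R (wj - v) = 0" using comb by simp
  moreover have "wj - v \<noteq> 0" using aj by auto
  ultimately show ?thesis using True by simp
next
  case False
  have "wi - v = (- \<beta> / \<alpha>) *\<^sub>R (wj - v)"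
  proof -
    have "\<alpha> *\<^sub>R (wi - v) = (- \<beta>) *\<^sub>R (wj - v)" using comb by (simp add: eq_neg_iff_add_eq_0)
    then have "(1/\<alpha>) *\<^sub>R (\<alpha> *\<^sub>R (wi - v)) = (1/\<alpha>) *\<^sub>R ((- \<beta>) *\<^sub>R (wj - v))" by simp
    then show ?thesis using False by (simp add: divide_inverse)
  qed
  then show ?thesis using no_parallel_aux[OF K wi wj ne ai aj] by blast
qed

lemma solve_comb:
  fixes x y z :: "real^3"
  assumes h: "z = \<alpha> *\<^sub>R x + \<beta> *\<^sub>R y" and a: "\<alpha> \<noteq> 0"
  shows "x = (1/\<alpha>) *\<^sub>R z + (- \<beta> / \<alpha>) *\<^sub>R y"
proof -
  have "(1/\<alpha>) *\<^sub>R z = x + (\<beta> / \<alpha>) *\<^sub>R y" using h a by (simp add: scaleR_add_right)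
  then show ?thesis by (simp add: algebra_simps)
qed

lemma mid_edge:
  fixes K :: "(real^3) set"
  assumes K: "polytope K" and em: "edg K v wm" and ei: "edg K v wi" and ej: "edg K v wj"
    and ni: "wi \<noteq> wm" and nj: "wj \<noteq> wm"
    and comb: "wm - v = \<alpha> *\<^sub>R (wi - v) + \<beta> *\<^sub>R (wj - v)" and pos: "\<alpha> > 0" "\<beta> > 0"
  shows False
proof -
  have face: "closed_segment v wm face_of K" using em unfolding edg_def by blast
  obtain d b where db: "\<And>x. x \<in> K \<Longrightarrow> d \<bullet> x \<le> b" "closed_segment v wm = K \<inter> {x. d \<bullet> x = b}"
    using poly_exposed[OF K face] by blast
  have dv: "d \<bullet> v = b" "d \<bullet> wm = b" using db(2) ends_in_segment by blast+
  have vK: "v \<in> K" "wm \<in> K" using em ext_in unfolding edg_def by blast+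
  have lt: "d \<bullet> w < b" if "edg K v w" "w \<noteq> wm" for w
  proof -
    have w: "w extreme_point_of K" "w \<noteq> v" using that unfolding edg_def by auto
    have "w \<notin> closed_segment v wm" using ext_not_closed_seg[OF w(1) vK] w(2) that(2) by blast
    moreover have "w \<in> K" using w ext_in by blast
    ultimately have "d \<bullet> w \<noteq> b" using db(2) by blast
    then show ?thesis using db(1) \<open>w \<in> K\<close> by (simp add: less_le)
  qed
  have "d \<bullet> (wm - v) = \<alpha> * (d \<bullet> (wi - v)) + \<beta> * (d \<bullet> (wj - v))" using comb by (simp add: inner_add_right)
  moreover have "d \<bullet> (wm - v) = 0" using dv by (simp add: inner_diff_right)
  moreover have "d \<bullet> (wi - v) < 0" "d \<bullet> (wj - v) < 0" using lt[OF ei ni] lt[OF ej nj] dv by (simp_all add: inner_diff_right)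
  ultimately show False using pos by (smt (verit) mult_pos_neg)
qed

lemma three_edges:
  fixes K :: "(real^3) set"
  assumes K: "polytope K" "aff_dim K = 2"
    and e1: "edg K v w1" and e2: "edg K v w2" and e3: "edg K v w3"
    and n12: "w1 \<noteq> w2" and n13: "w1 \<noteq> w3" and n23: "w2 \<noteq> w3"
  shows False
proof -
  have v: "v extreme_point_of K" using e1 unfolding edg_def by blast
  have vK: "v \<in> K" using v ext_in by blast
  have w: "w1 extreme_point_of K" "w2 extreme_point_of K" "w3 extreme_point_of K"
    using e1 e2 e3 unfolding edg_def by blast+
  have wv: "w1 \<noteq> v" "w2 \<noteq> v" "w3 \<noteq> v" using e1 e2 e3 unfolding edg_def by auto
  obtain a where a: "\<And>x. x \<in> K \<Longrightarrow> x \<noteq> v \<Longrightarrow> a \<bullet> x < a \<bullet> v" using vertex_exposed[OF K(1) v] by blast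
  have aw: "a \<bullet> (w1 - v) < 0" "a \<bullet> (w2 - v) < 0" "a \<bullet> (w3 - v) < 0"
    using a[OF ext_in[OF w(1)] wv(1)] a[OF ext_in[OF w(2)] wv(2)] a[OF ext_in[OF w(3)] wv(3)]
    by (simp_all add: inner_diff_right)
  define V where "V = {x. x extreme_point_of K}"
  define S where "S = (+) (- v) ` V"
  have KV: "K = convex hull V" unfolding V_def by (rule poly_hull[OF K(1)])
  have "aff_dim K = aff_dim V" using aff_dim_convex_hull[of V] KV by simp
  moreover have "v \<in> affine hull V" using v unfolding V_def by (intro hull_inc) simp
  ultimately have "aff_dim K = int (dim S)" using aff_dim_eq_dim[of v V] S_def by simp
  then have dS: "dim S = 2" using K(2) by simp
  have xS: "w1 - v \<in> S" "w2 - v \<in> S" "w3 - v \<in> S" using w unfolding S_def V_def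
    by (auto intro!: image_eqI[where x=w1] image_eqI[where x=w2] image_eqI[where x=w3])
  have x12ne: "w1 - v \<noteq> w2 - v" using n12 by simp
  have ind12: "independent {w1 - v, w2 - v}"
    unfolding independent_explicit
  proof (intro conjI allI impI ballI)
    show "finite {w1 - v, w2 - v}" by simp
    fix c z assume h: "(\<Sum>z\<in>{w1 - v, w2 - v}. c z *\<^sub>R z) = 0" and z: "z \<in> {w1 - v, w2 - v}"
    have "c (w1 - v) *\<^sub>R (w1 - v) + c (w2 - v) *\<^sub>R (w2 - v) = 0" using h x12ne by simp
    then have "c (w1 - v) = 0 \<and> c (w2 - v) = 0" using no_parallel[OF vK w(1) w(2) n12 aw(1) aw(2)] by blast
    then show "c z = 0" using z by auto
  qed
  have "span S \<subseteq> span {w1 - v, w2 - v}"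
  proof -
    have "span S \<subseteq> span {w1 - v, w2 - v}"
      using card_ge_dim_independent[of "{w1 - v, w2 - v}" "span S"] ind12 xS dS x12ne
      by (simp add: span_base span_span)
    then show ?thesis .
  qed
  then have "w3 - v \<in> span {w1 - v, w2 - v}" using xS(3) span_base by blast
  then obtain \<alpha> \<beta> where ab: "w3 - v = \<alpha> *\<^sub>R (w1 - v) + \<beta> *\<^sub>R (w2 - v)"
    unfolding span_insert span_singleton by (auto simp: algebra_simps)
  show False
  proof (cases "\<alpha> > 0")
    case apos: True
    show False
    proof (cases "\<beta> > 0")
      case True
      then show False using mid_edge[OF K(1) e3 e1 e2 n13 n23 ab apos] by blast
    next
      case False
      show False
      proof (cases "\<beta> = 0")
        case True
        then have "(-\<alpha>) *\<^sub>R (w1 - v) + 1 *\<^sub>R (w3 - v) = 0" using ab by simp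
        from no_parallel[OF vK w(1) w(3) n13 aw(1) aw(3) this] show False by simp
      next
        case False
        then have bneg: "\<beta> < 0" using \<open>\<not> \<beta> > 0\<close> by simp
        have "w1 - v = (1/\<alpha>) *\<^sub>R (w3 - v) + (- \<beta> / \<alpha>) *\<^sub>R (w2 - v)"
          using solve_comb[OF ab] apos by simp
        moreover have "1/\<alpha> > 0" "- \<beta> / \<alpha> > 0" using apos bneg by (simp_all add: divide_neg_pos)
        ultimately show False using mid_edge[OF K(1) e1 e3 e2 n13[symmetric] n12[symmetric]] by blast
      qed
    qed
  next
    case anp: False
    show False
    proof (cases "\<beta> > 0")
      case bpos: True
      show False
      proof (cases "\<alpha> = 0")
        case True
        then have "(-\<beta>) *\<^sub>R (w2 - v) + 1 *\<^sub>R (w3 - v) = 0" using ab by simp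
        from no_parallel[OF vK w(2) w(3) n23 aw(2) aw(3) this] show False by simp
      next
        case False
        then have aneg: "\<alpha> < 0" using anp by simp
        have ab': "w3 - v = \<beta> *\<^sub>R (w2 - v) + \<alpha> *\<^sub>R (w1 - v)" using ab by (simp add: add.commute)
        have "w2 - v = (1/\<beta>) *\<^sub>R (w3 - v) + (- \<alpha> / \<beta>) *\<^sub>R (w1 - v)"
          using solve_comb[OF ab'] bpos by simp
        moreover have "1/\<beta> > 0" "- \<alpha> / \<beta> > 0" using bpos aneg by (simp_all add: divide_neg_pos)
        ultimately show False using mid_edge[OF K(1) e2 e3 e1 n23[symmetric] n12] by blast
      qed
    next
      case False
      have "a \<bullet> (w3 - v) = \<alpha> * (a \<bullet> (w1 - v)) + \<beta> * (a \<bullet> (w2 - v))" using ab by (simp add: inner_add_right)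
      moreover have "\<alpha> * (a \<bullet> (w1 - v)) \<ge> 0" using anp aw(1) by (simp add: mult_nonpos_nonpos)
      moreover have "\<beta> * (a \<bullet> (w2 - v)) \<ge> 0" using False aw(2) by (simp add: mult_nonpos_nonpos)
      ultimately show False using aw(3) by linarith
    qed
  qed
qed

lemma deg_two:
  fixes K :: "(real^3) set"
  assumes K: "polytope K" "aff_dim K = 2" and v: "v extreme_point_of K"
  shows "card {w. edg K v w} = 2"
proof -
  obtain u1 u2 where u12: "u1 extreme_point_of K" "u2 extreme_point_of K"
      "\<And>\<alpha> \<beta>. \<alpha> *\<^sub>R (u1 - v) + \<beta> *\<^sub>R (u2 - v) = 0 \<Longrightarrow> \<alpha> = 0 \<and> \<beta> = 0"
    using two_vertices[OF K(1) v] K(2) by auto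
  obtain b where b: "b \<bullet> (u1 - v) > 0" "b \<bullet> (u2 - v) < 0" using two_sided[of "u1 - v" "u2 - v"] u12(3) by blast
  obtain w1 where w1: "edg K v w1" "b \<bullet> v < b \<bullet> w1"
    using simplex_step[OF K(1) v u12(1), of b] b(1) by (auto simp: inner_diff_right)
  obtain w2 where w2: "edg K v w2" "(- b) \<bullet> v < (- b) \<bullet> w2"
    using simplex_step[OF K(1) v u12(2), of "- b"] b(2) by (auto simp: inner_diff_right)
  have n12: "w1 \<noteq> w2" using w1(2) w2(2) by auto
  have "{w. edg K v w} = {w1, w2}"
  proof
    show "{w1, w2} \<subseteq> {w. edg K v w}" using w1 w2 by auto
    show "{w. edg K v w} \<subseteq> {w1, w2}"
    proof
      fix w assume "w \<in> {w. edg K v w}"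
      then have e: "edg K v w" by simp
      show "w \<in> {w1, w2}"
      proof (rule ccontr)
        assume "w \<notin> {w1, w2}"
        then show False using three_edges[OF K w1(1) w2(1) e n12] by auto
      qed
    qed
  qed
  then show ?thesis using n12 by simp
qed

lemma parity_count:
  fixes V A B :: "'a set" and E :: "'a \<Rightarrow> 'a \<Rightarrow> bool"
  assumes fin: "finite V" and EV: "\<And>x y. E x y \<Longrightarrow> y \<in> V"
    and sym: "\<And>x y. E x y \<Longrightarrow> E y x"
    and deg: "\<And>x. x \<in> V \<Longrightarrow> card {y. E x y} = 2"
    and AB: "A \<union> B = V" "A \<inter> B = {}"
    and alt: "\<And>x y. E x y \<Longrightarrow> x \<in> A \<Longrightarrow> y \<in> B"
    and alt2: "\<And>x y. E x y \<Longrightarrow> x \<in> B \<Longrightarrow> y \<in> A"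
  shows "even (card V)"
proof -
  have finA: "finite A" "finite B" using fin AB by auto
  have nA: "{y. E x y} = {y\<in>B. E x y}" if "x \<in> A" for x using alt that by auto
  have nB: "{y. E x y} = {y\<in>A. E y x}" if "x \<in> B" for x using alt2 sym that by auto
  have "(\<Sum>x\<in>A. card {y. E x y}) = (\<Sum>x\<in>A. \<Sum>y\<in>B. if E x y then 1 else 0)"
  proof (rule sum.cong[OF refl])
    fix x assume x: "x \<in> A"
    have "card {y\<in>B. E x y} = (\<Sum>y\<in>B. if E x y then 1 else 0)"
      using sum.inter_filter[OF finA(2), of "\<lambda>_. 1::nat" "E x"] by simp
    then show "card {y. E x y} = (\<Sum>y\<in>B. if E x y then 1 else 0)" using nA[OF x] by simp
  qed
  also have "\<dots> = (\<Sum>y\<in>B. \<Sum>x\<in>A. if E x y then 1 else 0)" by (rule sum.swap)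
  also have "\<dots> = (\<Sum>y\<in>B. card {y'. E y y'})"
  proof (rule sum.cong[OF refl])
    fix y assume y: "y \<in> B"
    have "card {x\<in>A. E x y} = (\<Sum>x\<in>A. if E x y then 1 else 0)"
      using sum.inter_filter[OF finA(1), of "\<lambda>_. 1::nat" "\<lambda>x. E x y"] by simp
    then show "(\<Sum>x\<in>A. if E x y then 1 else 0) = card {y'. E y y'}" using nB[OF y] by simp
  qed
  finally have eq: "(\<Sum>x\<in>A. card {y. E x y}) = (\<Sum>y\<in>B. card {y'. E y y'})" .
  have "(\<Sum>x\<in>A. card {y. E x y}) = (\<Sum>x\<in>A. 2)" using deg AB by (intro sum.cong) auto
  then have s1: "(\<Sum>x\<in>A. card {y. E x y}) = 2 * card A" by simp
  have "(\<Sum>y\<in>B. card {y'. E y y'}) = (\<Sum>x\<in>B. 2)" using deg AB by (intro sum.cong) auto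
  then have s2: "(\<Sum>y\<in>B. card {y'. E y y'}) = 2 * card B" by simp
  note s1 moreover note s2
  ultimately have "card A = card B" using eq by simp
  moreover have "card V = card A + card B" using AB finA card_Un_disjoint by metis
  ultimately show ?thesis by simp
qed

definition rfl :: "real^3 \<Rightarrow> real^3 \<Rightarrow> real^3" where
  "rfl e a = a - (2 * (a \<bullet> e) / (e \<bullet> e)) *\<^sub>R e"

lemma cross_id:
  fixes n e a :: "real^3"
  assumes ne: "n \<bullet> e = 0"
  shows "(e \<bullet> e) *\<^sub>R cross3 n a = (a \<bullet> e) *\<^sub>R cross3 n e + (cross3 n a \<bullet> e) *\<^sub>R e"
proof -
  have h: "n$1 * e$1 + n$2 * e$2 + n$3 * e$3 = 0" using ne by (simp add: inner_vec_def sum_3)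
  show ?thesis
    unfolding vec_eq_iff forall_3 using h
    by (simp add: cross3_def inner_vec_def sum_3 vector_def; algebra)
qed

lemma cross_rfl:
  fixes n e a :: "real^3"
  assumes ne: "n \<bullet> e = 0" and e: "e \<noteq> 0"
  shows "cross3 n (rfl e a) = - rfl e (cross3 n a)"
proof -
  have ee: "e \<bullet> e \<noteq> 0" using e by simp
  have 1: "cross3 n (rfl e a) = cross3 n a - (2 * (a \<bullet> e) / (e \<bullet> e)) *\<^sub>R cross3 n e"
    by (simp add: rfl_def Cross3.right_diff_distrib cross_mult_right)
  have 2: "rfl e (cross3 n a) = cross3 n a - (2 * (cross3 n a \<bullet> e) / (e \<bullet> e)) *\<^sub>R e"
    by (simp add: rfl_def)
  define X where "X = cross3 n a"
  define Y where "Y = cross3 n e"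
  define s where "s = X \<bullet> e"
  have 3: "(e \<bullet> e) *\<^sub>R X = (a \<bullet> e) *\<^sub>R Y + s *\<^sub>R e"
    using cross_id[OF ne, of a] unfolding X_def Y_def s_def .
  have 4: "X = ((a \<bullet> e) / (e \<bullet> e)) *\<^sub>R Y + (s / (e \<bullet> e)) *\<^sub>R e"
  proof -
    have "(1 / (e \<bullet> e)) *\<^sub>R ((e \<bullet> e) *\<^sub>R X) = (1 / (e \<bullet> e)) *\<^sub>R ((a \<bullet> e) *\<^sub>R Y + s *\<^sub>R e)"
      using 3 by simp
    then show ?thesis using ee by (simp add: scaleR_add_right)
  qed
  have "X - (2 * (a \<bullet> e) / (e \<bullet> e)) *\<^sub>R Y = - (X - (2 * s / (e \<bullet> e)) *\<^sub>R e)"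
    unfolding 4 by (simp add: vec_eq_iff; simp add: field_simps)
  moreover have "rfl e X = X - (2 * s / (e \<bullet> e)) *\<^sub>R e" unfolding rfl_def s_def ..
  ultimately show ?thesis unfolding 1 X_def[symmetric] Y_def[symmetric] by simp
qed

lemma rfl_linear: "linear (rfl e)"
  by (rule linearI) (simp_all add: rfl_def inner_add_left algebra_simps add_divide_distrib scaleR_add_left)

lemma rfl_zero [simp]: "rfl e 0 = 0"
  by (simp add: rfl_def)

lemma rfl_neg_arg: "rfl e (- a) = - rfl e a"
  by (simp add: rfl_def)

lemma rfl_rfl: "e \<noteq> 0 \<Longrightarrow> rfl e (rfl e a) = a"
  by (simp add: rfl_def inner_diff_left algebra_simps) 

lemma rfl_minus_e: "rfl (- e) a = rfl e a"
  by (simp add: rfl_def)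

lemma rfl_fix: "n \<bullet> e = 0 \<Longrightarrow> rfl e n = n"
  by (simp add: rfl_def)

lemma rfl_inj: "e \<noteq> 0 \<Longrightarrow> rfl e a = 0 \<Longrightarrow> a = 0"
  using rfl_rfl[of e a] by simp

lemma fin_min_pos:
  fixes f :: "'a \<Rightarrow> real"
  assumes "finite U" "\<And>u. u \<in> U \<Longrightarrow> f u > 0"
  obtains \<delta> where "\<delta> > 0" "\<And>u. u \<in> U \<Longrightarrow> \<delta> \<le> f u"
proof (cases "U = {}")
  case True then show ?thesis using that[of 1] by simp
next
  case False
  have "Min (f ` U) > 0" using assms False by simp
  moreover have "\<And>u. u \<in> U \<Longrightarrow> Min (f ` U) \<le> f u" using assms(1) by simp
  ultimately show ?thesis using that by blast
qed

lemma ball_orth: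
  fixes c z :: "real^3"
  assumes d: "\<delta> > 0" and h: "\<And>u. u \<in> ball c \<delta> \<Longrightarrow> u \<bullet> z = 0"
  shows "z = 0"
proof (rule ccontr)
  assume z: "z \<noteq> 0"
  have "c \<in> ball c \<delta>" using d by simp
  then have cz: "c \<bullet> z = 0" using h by blast
  define u where "u = c + (\<delta> / 2 / norm z) *\<^sub>R z"
  have "dist c u = \<delta> / 2" using z d by (simp add: u_def dist_norm)
  then have "u \<in> ball c \<delta>" using d by simp
  then have "u \<bullet> z = 0" using h by blast
  moreover have "u \<bullet> z = (\<delta> / 2 / norm z) * (z \<bullet> z)" using cz by (simp add: u_def inner_add_left)
  moreover have "(\<delta> / 2 / norm z) * (z \<bullet> z) > 0" using z d by simp
  ultimately show False by linarith
qed

lemma normal_cone_vertex: "normal_cone P {p} = {c. \<forall>y\<in>P. c \<bullet> y \<le> c \<bullet> p}"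
  by (simp add: normal_cone_def)

lemma ball_normal:
  fixes P :: "(real^3) set"
  assumes P: "polytope P" and p: "p extreme_point_of P"
  obtains c \<delta> where "\<delta> > 0" "ball c \<delta> \<subseteq> normal_cone P {p}" "\<And>x. x \<in> P \<Longrightarrow> x \<noteq> p \<Longrightarrow> c \<bullet> x < c \<bullet> p"
proof -
  obtain a where a: "\<And>x. x \<in> P \<Longrightarrow> x \<noteq> p \<Longrightarrow> a \<bullet> x < a \<bullet> p" using vertex_exposed[OF P p] by blast
  define U where "U = {x. x extreme_point_of P} - {p}"
  have finU: "finite U" using poly_vert_finite[OF P] U_def by simp
  have pos: "a \<bullet> (p - u) / norm (p - u) > 0" if "u \<in> U" for u
  proof -
    have "u \<in> P" "u \<noteq> p" using that U_def ext_in by auto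
    then show ?thesis using a by (simp add: inner_diff_right)
  qed
  obtain \<delta> where \<delta>: "\<delta> > 0" "\<And>u. u \<in> U \<Longrightarrow> \<delta> \<le> a \<bullet> (p - u) / norm (p - u)"
    using fin_min_pos[OF finU, of "\<lambda>u. a \<bullet> (p - u) / norm (p - u)"] pos by blast
  have "ball a \<delta> \<subseteq> normal_cone P {p}"
  proof
    fix c assume c: "c \<in> ball a \<delta>"
    have "c \<bullet> u \<le> c \<bullet> p" if u: "u extreme_point_of P" for u
    proof (cases "u = p")
      case True then show ?thesis by simp
    next
      case False
      then have uU: "u \<in> U" using u U_def by simp
      have np: "norm (p - u) > 0" using False by simp
      have "\<bar>(c - a) \<bullet> (p - u)\<bar> \<le> norm (c - a) * norm (p - u)" by (rule Cauchy_Schwarz_ineq2)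
      moreover have "norm (c - a) < \<delta>" using c by (simp add: dist_norm norm_minus_commute)
      then have "norm (c - a) * norm (p - u) \<le> \<delta> * norm (p - u)" by (simp add: mult_right_mono)
      moreover have "\<delta> * norm (p - u) \<le> a \<bullet> (p - u)" using \<delta>(2)[OF uU] np by (simp add: le_divide_eq)
      ultimately have "\<bar>(c - a) \<bullet> (p - u)\<bar> \<le> a \<bullet> (p - u)" by linarith
      then have "0 \<le> c \<bullet> (p - u)" by (simp add: inner_diff_left)
      then show ?thesis by (simp add: inner_diff_right)
    qed
    then have "\<forall>y\<in>P. c \<bullet> y \<le> c \<bullet> p" using poly_bound[OF P] by blast
    then show "c \<in> normal_cone P {p}" by (simp add: normal_cone_def)
  qed
  then show ?thesis using that \<delta>(1) a by blast
qed

lemma vertex_corr: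
  fixes P Q :: "(real^3) set"
  assumes P: "polytope P" and fan: "normal_fan Q = normal_fan P" and p: "p extreme_point_of P"
  shows "\<exists>w. w extreme_point_of Q \<and> normal_cone P {p} = normal_cone Q {w}"
proof -
  have pf: "{p} face_of P" using p face_of_singleton by blast
  have "normal_cone P {p} \<in> normal_fan P" unfolding normal_fan_def
    apply (rule CollectI) apply (rule exI[of _ "{p}"]) using pf by simp
  then have "normal_cone P {p} \<in> normal_fan Q" using fan by simp
  then have "\<exists>G. normal_cone P {p} = normal_cone Q G \<and> G face_of Q \<and> G \<noteq> {}"
    by (simp add: normal_fan_def)
  then obtain G where G: "G face_of Q" "G \<noteq> {}" "normal_cone P {p} = normal_cone Q G"
    by blast
  obtain \<delta> c where c: "\<delta> > 0" "ball c \<delta> \<subseteq> normal_cone P {p}"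
    "\<And>x. x \<in> P \<Longrightarrow> x \<noteq> p \<Longrightarrow> c \<bullet> x < c \<bullet> p" by (rule ball_normal[OF P p]) blast
  have GQ: "G \<subseteq> Q" using face_of_imp_subset[OF G(1)] .
  have single: "x = y" if xy: "x \<in> G" "y \<in> G" for x y
  proof -
    have "u \<bullet> (x - y) = 0" if u: "u \<in> ball c \<delta>" for u
    proof -
      have "u \<in> normal_cone P {p}" using c(2) u by (rule subsetD)
      then have "u \<in> normal_cone Q G" using G(3) by simp
      then have all: "\<forall>x\<in>G. \<forall>y\<in>Q. u \<bullet> y \<le> u \<bullet> x" by (simp add: normal_cone_def)
      have "y \<in> Q" "x \<in> Q" using xy GQ by auto
      then have "u \<bullet> y \<le> u \<bullet> x" "u \<bullet> x \<le> u \<bullet> y" using all xy by auto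
      then show ?thesis by (simp add: inner_diff_right)
    qed
    then have "x - y = 0" by (rule ball_orth[OF c(1)])
    then show ?thesis by simp
  qed
  obtain w where w: "w \<in> G" using G(2) by blast
  have Gw: "G = {w}"
  proof
    show "G \<subseteq> {w}"
    proof
      fix x assume "x \<in> G"
      then show "x \<in> {w}" using single[OF \<open>x \<in> G\<close> w] by simp
    qed
    show "{w} \<subseteq> G" using w by simp
  qed
  have "w extreme_point_of Q" using G(1) unfolding Gw face_of_singleton .
  moreover have "normal_cone P {p} = normal_cone Q {w}" using G(3) unfolding Gw .
  ultimately show ?thesis by blast
qed

definition wmap :: "(real^3) set \<Rightarrow> (real^3) set \<Rightarrow> real^3 \<Rightarrow> real^3" where
  "wmap Q P p = (SOME w. w extreme_point_of Q \<and> normal_cone P {p} = normal_cone Q {w})"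

lemma wmap_prop:
  fixes P Q :: "(real^3) set"
  assumes P: "polytope P" and fan: "normal_fan Q = normal_fan P" and p: "p extreme_point_of P"
  shows "wmap Q P p extreme_point_of Q" "normal_cone P {p} = normal_cone Q {wmap Q P p}"
  using someI_ex[OF vertex_corr[OF P fan p]] unfolding wmap_def by blast+

lemma support_at_vertex:
  fixes P Q :: "(real^3) set"
  assumes P: "polytope P" and fan: "normal_fan Q = normal_fan P" and p: "p extreme_point_of P"
    and u: "\<And>y. y \<in> P \<Longrightarrow> u \<bullet> y \<le> u \<bullet> p"
  shows "support_fun Q u = u \<bullet> wmap Q P p"
proof -
  have "u \<in> normal_cone P {p}" using u by (simp add: normal_cone_def)
  then have un: "u \<in> normal_cone Q {wmap Q P p}" using wmap_prop(2)[OF P fan p] by simp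
  have wQ: "wmap Q P p \<in> Q" using wmap_prop(1)[OF P fan p] ext_in by blast
  have "Sup ((\<lambda>x. u \<bullet> x) ` Q) = u \<bullet> wmap Q P p"
    apply (rule cSup_eq_maximum)
    using wQ un by (auto simp: normal_cone_def)
  then show ?thesis by (simp add: support_fun_def)
qed

lemma cover_vertex:
  fixes P :: "(real^3) set"
  assumes P: "polytope P" "P \<noteq> {}"
  shows "\<exists>p. p extreme_point_of P \<and> (\<forall>y\<in>P. u \<bullet> y \<le> u \<bullet> p)"
proof -
  define V where "V = {x. x extreme_point_of P}"
  have finV: "finite V" using poly_vert_finite[OF P(1)] V_def by simp
  have "V \<noteq> {}" using poly_hull[OF P(1)] P(2) V_def by auto
  then have "Max ((\<lambda>x. u \<bullet> x) ` V) \<in> (\<lambda>x. u \<bullet> x) ` V" using finV by simp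
  then obtain p where p: "p \<in> V" "u \<bullet> p = Max ((\<lambda>x. u \<bullet> x) ` V)" by auto
  have "u \<bullet> v \<le> u \<bullet> p" if "v extreme_point_of P" for v
    using p(2) finV that V_def by simp
  then have "\<forall>y\<in>P. u \<bullet> y \<le> u \<bullet> p" using poly_bound[OF P(1)] by blast
  then show ?thesis using p V_def by blast
qed

lemma rfl_add: "rfl e (a + b) = rfl e a + rfl e b"
  by (simp add: rfl_def inner_add_left add_divide_distrib scaleR_add_left algebra_simps)

lemma rfl_scale: "rfl e (c *\<^sub>R a) = c *\<^sub>R rfl e a"
  by (simp add: rfl_def scaleR_diff_right)

lemma rfl_diff: "rfl e (a - b) = rfl e a - rfl e b"
  using rfl_add[of e a "- b"] rfl_neg_arg[of e b] by simp

lemma rfl_sum: "rfl e (sum f S) = sum (\<lambda>h. rfl e (f h)) S"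
  by (induct S rule: infinite_finite_induct) (simp_all add: rfl_add)

lemma wmap_distinct:
  fixes P Q :: "(real^3) set"
  assumes P: "polytope P" and fan: "normal_fan Q = normal_fan P"
    and p: "p extreme_point_of P" and q: "q extreme_point_of P" and pq: "p \<noteq> q"
  shows "wmap Q P p \<noteq> wmap Q P q"
proof
  assume eq: "wmap Q P p = wmap Q P q"
  obtain c where c: "\<And>x. x \<in> P \<Longrightarrow> x \<noteq> p \<Longrightarrow> c \<bullet> x < c \<bullet> p" by (rule vertex_exposed[OF P p]) blast
  have "c \<in> normal_cone P {p}" using c by (force simp: normal_cone_def less_imp_le)
  also have "normal_cone P {p} = normal_cone P {q}"
    using wmap_prop(2)[OF P fan p] wmap_prop(2)[OF P fan q] eq by simp
  finally have "c \<bullet> p \<le> c \<bullet> q" using ext_in[OF p] by (simp add: normal_cone_def)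
  moreover have "c \<bullet> q < c \<bullet> p" using c ext_in[OF q] pq by blast
  ultimately show False by simp
qed

lemma seg_vertex:
  fixes P :: "(real^3) set"
  assumes "u extreme_point_of P" "p \<in> P" "q \<in> P" "u \<in> closed_segment p q"
  shows "u = p \<or> u = q"
  using ext_not_closed_seg[OF assms(1-3)] assms(4) by blast

lemma perturb:
  fixes P :: "(real^3) set"
  assumes P: "polytope P" and e: "edg P p q" and z: "z \<bullet> (p - q) = 0"
  obtains a \<delta> where "\<delta> > 0" "\<And>y. y \<in> P \<Longrightarrow> a \<bullet> y \<le> a \<bullet> p" "a \<bullet> p = a \<bullet> q"
    "\<And>y. y \<in> P \<Longrightarrow> (a + \<delta> *\<^sub>R z) \<bullet> y \<le> (a + \<delta> *\<^sub>R z) \<bullet> p"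
proof -
  have face: "closed_segment p q face_of P" and p: "p extreme_point_of P" and q: "q extreme_point_of P"
    using e unfolding edg_def by auto
  obtain a b where ab: "\<And>x. x \<in> P \<Longrightarrow> a \<bullet> x \<le> b" "closed_segment p q = P \<inter> {x. a \<bullet> x = b}"
    by (rule poly_exposed[OF P face]) blast
  have ap: "a \<bullet> p = b" "a \<bullet> q = b" using ab(2) ends_in_segment by blast+
  have zq: "z \<bullet> q = z \<bullet> p" using z by (simp add: inner_diff_right)
  define U where "U = {u. u extreme_point_of P \<and> u \<notin> closed_segment p q}"
  have finU: "finite U" using poly_vert_finite[OF P] U_def by (auto intro: finite_subset)
  have Ult: "a \<bullet> u < b" if "u \<in> U" for u
  proof -
    have "u \<in> P" using that U_def ext_in by blast
    moreover have "u \<notin> closed_segment p q" using that U_def by blast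
    ultimately show ?thesis using ab by (force simp: less_le)
  qed
  define f where "f u = (b - a \<bullet> u) / (\<bar>z \<bullet> (u - p)\<bar> + 1)" for u
  have fpos: "f u > 0" if "u \<in> U" for u using Ult[OF that] by (simp add: f_def)
  obtain \<delta> where \<delta>: "\<delta> > 0" "\<And>u. u \<in> U \<Longrightarrow> \<delta> \<le> f u"
    using fin_min_pos[OF finU, of f] fpos by blast
  have vb: "(a + \<delta> *\<^sub>R z) \<bullet> u \<le> (a + \<delta> *\<^sub>R z) \<bullet> p" if u: "u extreme_point_of P" for u
  proof (cases "u \<in> closed_segment p q")
    case True
    then have "u = p \<or> u = q" using seg_vertex[OF u ext_in[OF p] ext_in[OF q]] by blast
    then show ?thesis using ap zq by (auto simp: inner_add_left)
  next
    case False
    then have uU: "u \<in> U" using u U_def by blast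
    have k: "\<bar>z \<bullet> (u - p)\<bar> + 1 > 0" by simp
    have "\<delta> * \<bar>z \<bullet> (u - p)\<bar> \<le> f u * \<bar>z \<bullet> (u - p)\<bar>" using \<delta>(2)[OF uU] by (simp add: mult_right_mono)
    also have "\<dots> \<le> b - a \<bullet> u"
    proof -
      have "f u * \<bar>z \<bullet> (u - p)\<bar> = (b - a \<bullet> u) * (\<bar>z \<bullet> (u - p)\<bar> / (\<bar>z \<bullet> (u - p)\<bar> + 1))"
        by (simp add: f_def)
      also have "\<dots> \<le> (b - a \<bullet> u) * 1"
        using Ult[OF uU] by (intro mult_left_mono) simp_all
      finally show ?thesis by simp
    qed
    finally have "\<delta> * (z \<bullet> (u - p)) \<le> b - a \<bullet> u" by (smt (verit) abs_ge_self mult_left_mono \<delta>(1))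
    then show ?thesis using ap by (simp add: inner_add_left inner_diff_right algebra_simps)
  qed
  have H1: "\<And>y. y \<in> P \<Longrightarrow> (a + \<delta> *\<^sub>R z) \<bullet> y \<le> (a + \<delta> *\<^sub>R z) \<bullet> p"
    using poly_bound[OF P] vb by blast
  have H2: "\<And>y. y \<in> P \<Longrightarrow> a \<bullet> y \<le> a \<bullet> p" using ab(1) ap by simp
  have ap': "a \<bullet> p = a \<bullet> q" using ap by simp
  show ?thesis by (rule that[OF \<delta>(1) H2 ap' H1])
qed

lemma wmap_edge:
  fixes P Q :: "(real^3) set"
  assumes P: "polytope P" and fan: "normal_fan Q = normal_fan P"
    and r: "\<And>v. v extreme_point_of Q \<Longrightarrow> norm v = r" and e: "edg P p q"
  shows "wmap Q P q = rfl (p - q) (wmap Q P p)"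
proof -
  have p: "p extreme_point_of P" and q: "q extreme_point_of P" and pq: "p \<noteq> q" using e unfolding edg_def by auto
  define ev where "ev = p - q"
  have ev0: "ev \<noteq> 0" using pq ev_def by simp
  define Wp where "Wp = wmap Q P p"
  define Wq where "Wq = wmap Q P q"
  define D where "D = Wp - Wq"
  have orth: "z \<bullet> D = 0" if z: "z \<bullet> ev = 0" for z
  proof -
    obtain a \<delta> where ad: "\<delta> > 0" "\<And>y. y \<in> P \<Longrightarrow> a \<bullet> y \<le> a \<bullet> p" "a \<bullet> p = a \<bullet> q"
      "\<And>y. y \<in> P \<Longrightarrow> (a + \<delta> *\<^sub>R z) \<bullet> y \<le> (a + \<delta> *\<^sub>R z) \<bullet> p"
      by (rule perturb[OF P e z[unfolded ev_def]]) blast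
    have zq: "z \<bullet> q = z \<bullet> p" using z by (simp add: ev_def inner_diff_right)
    have aq: "\<And>y. y \<in> P \<Longrightarrow> a \<bullet> y \<le> a \<bullet> q" using ad(2,3) by simp
    have adq: "\<And>y. y \<in> P \<Longrightarrow> (a + \<delta> *\<^sub>R z) \<bullet> y \<le> (a + \<delta> *\<^sub>R z) \<bullet> q"
      using ad(3,4) zq by (simp add: inner_add_left)
    have "support_fun Q a = a \<bullet> Wp" "support_fun Q a = a \<bullet> Wq"
      using support_at_vertex[OF P fan p, of a] support_at_vertex[OF P fan q, of a] ad(2) aq
      unfolding Wp_def Wq_def by blast+
    then have 1: "a \<bullet> D = 0" by (simp add: D_def inner_diff_right)
    have "support_fun Q (a + \<delta> *\<^sub>R z) = (a + \<delta> *\<^sub>R z) \<bullet> Wp"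
         "support_fun Q (a + \<delta> *\<^sub>R z) = (a + \<delta> *\<^sub>R z) \<bullet> Wq"
      using support_at_vertex[OF P fan p, of "a + \<delta> *\<^sub>R z"] support_at_vertex[OF P fan q, of "a + \<delta> *\<^sub>R z"]
        ad(4) adq unfolding Wp_def Wq_def by blast+
    then have "(a + \<delta> *\<^sub>R z) \<bullet> D = 0" by (simp add: D_def inner_diff_right)
    then have "\<delta> * (z \<bullet> D) = 0" using 1 by (simp add: inner_add_left)
    then show ?thesis using ad(1) by simp
  qed
  define s where "s = (D \<bullet> ev) / (ev \<bullet> ev)"
  have ee: "ev \<bullet> ev \<noteq> 0" using ev0 by simp
  have Dse: "D = s *\<^sub>R ev"
  proof -
    define z where "z = D - s *\<^sub>R ev"
    have "z \<bullet> ev = 0" using ee by (simp add: z_def s_def inner_diff_left)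
    then have "z \<bullet> D = 0" by (rule orth)
    then have "z \<bullet> z = 0" using \<open>z \<bullet> ev = 0\<close> by (simp add: z_def inner_diff_left inner_diff_right inner_commute)
    then show ?thesis by (simp add: z_def)
  qed
  have WpQ: "Wp extreme_point_of Q" "Wq extreme_point_of Q"
    using wmap_prop(1)[OF P fan p] wmap_prop(1)[OF P fan q] Wp_def Wq_def by auto
  have "norm Wp = norm Wq" using r WpQ by simp
  then have "Wp \<bullet> Wp = Wq \<bullet> Wq" by (simp add: dot_square_norm)
  then have "(Wp + Wq) \<bullet> D = 0" by (simp add: D_def inner_add_left inner_add_right inner_diff_left inner_diff_right inner_commute)
  then have "s * ((Wp + Wq) \<bullet> ev) = 0" using Dse by simp
  moreover have "D \<noteq> 0" using wmap_distinct[OF P fan p q pq] D_def Wp_def Wq_def by simp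
  then have "s \<noteq> 0" using Dse by auto
  ultimately have h: "(Wp + Wq) \<bullet> ev = 0" by simp
  have Wq: "Wq = Wp - s *\<^sub>R ev" using Dse D_def by (simp add: algebra_simps)
  have "(2 *\<^sub>R Wp - s *\<^sub>R ev) \<bullet> ev = 0" using h unfolding Wq by (simp add: inner_add_left inner_diff_left scaleR_2)
  then have "2 * (Wp \<bullet> ev) = s * (ev \<bullet> ev)" by (simp add: inner_diff_left)
  then have "s = 2 * (Wp \<bullet> ev) / (ev \<bullet> ev)" using ee by (simp add: field_simps)
  then show ?thesis unfolding Wq_def[symmetric] Wp_def[symmetric] ev_def[symmetric] Wq rfl_def by simp
qed

definition Lset :: "(real^3) set \<Rightarrow> (real^3 \<Rightarrow> real^3) set" where
  "Lset P = {x. \<forall>p q. edg P p q \<longrightarrow> x q = rfl (p - q) (x p)}"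

lemma InCone_D:
  assumes "Q \<in> InCone P"
  shows "polytope Q" "normal_fan Q = normal_fan P" "\<exists>r>0. \<forall>v. v extreme_point_of Q \<longrightarrow> norm v = r"
  using assms unfolding InCone_def by auto

lemma wmap_L:
  fixes P Q :: "(real^3) set"
  assumes P: "polytope P" and Q: "Q \<in> InCone P"
  shows "wmap Q P \<in> Lset P"
proof -
  obtain r where r: "\<And>v. v extreme_point_of Q \<Longrightarrow> norm v = r" using InCone_D(3)[OF Q] by blast
  show ?thesis unfolding Lset_def using wmap_edge[OF P InCone_D(2)[OF Q] r] by blast
qed

lemma Lset_sum:
  assumes "\<And>h. h \<in> S \<Longrightarrow> X h \<in> Lset P"
  shows "(\<lambda>p. \<Sum>h\<in>S. c h *\<^sub>R X h p) \<in> Lset P"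
  unfolding Lset_def
proof (intro CollectI allI impI)
  fix p q assume e: "edg P p q"
  have "\<And>h. h \<in> S \<Longrightarrow> X h q = rfl (p - q) (X h p)" using assms e unfolding Lset_def by blast
  then show "(\<Sum>h\<in>S. c h *\<^sub>R X h q) = rfl (p - q) (\<Sum>h\<in>S. c h *\<^sub>R X h p)"
    by (simp add: rfl_sum rfl_scale)
qed

lemma Lset_zero:
  fixes P :: "(real^3) set"
  assumes P: "polytope P" and x: "x \<in> Lset P" and p0: "p0 extreme_point_of P" and x0: "x p0 = 0"
    and v: "v extreme_point_of P"
  shows "x v = 0"
proof -
  have "(edg P)\<^sup>*\<^sup>* v p0" by (rule connected_vertices[OF P v p0])
  then show ?thesis
  proof (induction rule: converse_rtranclp_induct)
    case base
    then show ?case using x0 .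
  next
    case (step y z)
    have "edg P z y" using step(1) by (rule edg_sym)
    then have "x y = rfl (z - y) (x z)" using x unfolding Lset_def by blast
    then show ?case using step(3) by simp
  qed
qed

lemma cross_cross:
  fixes a w :: "real^3"
  shows "cross3 a (cross3 a w) = (a \<bullet> w) *\<^sub>R a - (a \<bullet> a) *\<^sub>R w"
  unfolding vec_eq_iff forall_3
  by (simp add: cross3_def inner_vec_def sum_3 vector_def; algebra)

lemma expand3:
  fixes a b u :: "real^3"
  shows "(cross3 a b \<bullet> cross3 a b) *\<^sub>R u = (cross3 u b \<bullet> cross3 a b) *\<^sub>R a
     + (cross3 a u \<bullet> cross3 a b) *\<^sub>R b + (u \<bullet> cross3 a b) *\<^sub>R cross3 a b"
  unfolding vec_eq_iff forall_3
  by (simp add: cross3_def inner_vec_def sum_3 vector_def; algebra)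

lemma main_bound:
  fixes P :: "(real^3) set"
  assumes P: "polytope P" "P \<noteq> {}" and p0: "p0 extreme_point_of P"
    and S: "S \<subseteq> support_fun ` InCone P" "lin_indep_funs S"
  obtains B where "independent B" "card B = card S" "B \<subseteq> {x p0 | x. x \<in> Lset P}"
proof -
  have finS: "finite S" using S(2) unfolding lin_indep_funs_def by blast
  have indep: "\<And>c. (\<forall>x. (\<Sum>f\<in>S. c f * f x) = 0) \<Longrightarrow> \<forall>f\<in>S. c f = 0"
    using S(2) unfolding lin_indep_funs_def by blast
  define Qof where "Qof h = (SOME Q. Q \<in> InCone P \<and> support_fun Q = h)" for h
  have Qof: "Qof h \<in> InCone P \<and> support_fun (Qof h) = h" if "h \<in> S" for h
  proof -
    have "\<exists>Q. Q \<in> InCone P \<and> support_fun Q = h" using that S(1) by blast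
    from someI_ex[OF this] show ?thesis unfolding Qof_def .
  qed
  define W where "W h = wmap (Qof h) P" for h
  have WL: "W h \<in> Lset P" if "h \<in> S" for h
    using wmap_L[OF P(1)] Qof[OF that] W_def by simp
  have hval: "h u = u \<bullet> W h p"
    if hp: "h \<in> S" "p extreme_point_of P" "\<And>y. y \<in> P \<Longrightarrow> u \<bullet> y \<le> u \<bullet> p" for h u p
  proof -
    have QI: "Qof h \<in> InCone P" "support_fun (Qof h) = h" using Qof[OF hp(1)] by auto
    have "support_fun (Qof h) u = u \<bullet> wmap (Qof h) P p"
      by (rule support_at_vertex[OF P(1) InCone_D(2)[OF QI(1)] hp(2)]) (use hp(3) in auto)
    then show ?thesis using QI(2) W_def by simp
  qed
  define \<phi> where "\<phi> h = W h p0" for h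
  have key: "\<forall>h\<in>S. c h = 0" if c: "(\<Sum>h\<in>S. c h *\<^sub>R \<phi> h) = 0" for c
  proof -
    define X where "X = (\<lambda>p. \<Sum>h\<in>S. c h *\<^sub>R W h p)"
    have XL: "X \<in> Lset P" unfolding X_def by (rule Lset_sum) (rule WL)
    have X0: "X p0 = 0" using c unfolding X_def \<phi>_def .
    have "(\<Sum>h\<in>S. c h * h u) = 0" for u
    proof -
      obtain p where p: "p extreme_point_of P" "\<forall>y\<in>P. u \<bullet> y \<le> u \<bullet> p"
        using cover_vertex[OF P] by blast
      have "(\<Sum>h\<in>S. c h * h u) = (\<Sum>h\<in>S. c h * (u \<bullet> W h p))"
        using hval p by (intro sum.cong) auto
      also have "\<dots> = u \<bullet> X p" by (simp add: X_def inner_sum_right)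
      also have "X p = 0" by (rule Lset_zero[OF P(1) XL p0 X0 p(1)])
      finally show ?thesis by simp
    qed
    then show ?thesis using indep by blast
  qed
  have inj: "inj_on \<phi> S"
  proof (rule inj_onI)
    fix h1 h2 assume h: "h1 \<in> S" "h2 \<in> S" "\<phi> h1 = \<phi> h2"
    show "h1 = h2"
    proof (rule ccontr)
      assume ne: "h1 \<noteq> h2"
      define c where "c h = (if h = h1 then 1 else if h = h2 then -1 else (0::real))" for h
      have "(\<Sum>h\<in>S. c h *\<^sub>R \<phi> h) = (\<Sum>h\<in>S. (if h = h1 then \<phi> h else 0) - (if h = h2 then \<phi> h else 0))"
        by (intro sum.cong) (auto simp: c_def ne)
      also have "\<dots> = \<phi> h1 - \<phi> h2" using finS h by (simp add: sum_subtractf)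
      also have "\<dots> = 0" using h by simp
      finally have "\<forall>h\<in>S. c h = 0" using key by blast
      then have "c h1 = 0" using h(1) by blast
      then show False by (simp add: c_def)
    qed
  qed
  define B where "B = \<phi> ` S"
  have "card B = card S" using card_image[OF inj] B_def by simp
  moreover have "independent B"
    unfolding independent_explicit
  proof (intro conjI allI impI ballI)
    show "finite B" using finS B_def by simp
    fix c v assume h: "(\<Sum>v\<in>B. c v *\<^sub>R v) = 0" and v: "v \<in> B"
    have "(\<Sum>h\<in>S. c (\<phi> h) *\<^sub>R \<phi> h) = (\<Sum>v\<in>B. c v *\<^sub>R v)"
      unfolding B_def using sum.reindex[OF inj, of "\<lambda>v. c v *\<^sub>R v"] by simp
    then have "\<forall>h\<in>S. c (\<phi> h) = 0" using key[of "\<lambda>h. c (\<phi> h)"] h by simp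
    then show "c v = 0" using v B_def by auto
  qed
  moreover have "B \<subseteq> {x p0 | x. x \<in> Lset P}" using WL B_def \<phi>_def by auto
  ultimately show ?thesis using that by blast
qed

lemma parity:
  fixes K :: "(real^3) set" and n :: "real^3" and w0 y :: "real^3 \<Rightarrow> real^3"
  assumes K: "polytope K" "aff_dim K = 2" and od: "odd (card {v. v extreme_point_of K})"
    and n: "\<And>u v. u \<in> K \<Longrightarrow> v \<in> K \<Longrightarrow> n \<bullet> u = n \<bullet> v"
    and w0: "\<And>p q. edg K p q \<Longrightarrow> w0 q = rfl (p - q) (w0 p)"
    and y: "\<And>p q. edg K p q \<Longrightarrow> y q = rfl (p - q) (y p)"
    and p0: "p0 extreme_point_of K" and m0: "cross3 n (w0 p0) \<noteq> 0"
  shows "y p0 \<noteq> cross3 n (w0 p0)"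
proof
  assume y0: "y p0 = cross3 n (w0 p0)"
  define m where "m v = cross3 n (w0 v)" for v
  have nperp: "n \<bullet> (p - q) = 0" if "edg K p q" for p q
  proof -
    have "p extreme_point_of K" "q extreme_point_of K" using that unfolding edg_def by simp_all
    then have "p \<in> K" "q \<in> K" using ext_in by blast+
    then have "n \<bullet> p = n \<bullet> q" by (rule n)
    then show ?thesis by (simp add: inner_diff_right)
  qed
  have ne: "p - q \<noteq> 0" if "edg K p q" for p q using that unfolding edg_def by auto
  have mrel: "m q = - rfl (p - q) (m p)" if "edg K p q" for p q
    unfolding m_def w0[OF that] by (rule cross_rfl[OF nperp[OF that] ne[OF that]])
  have claim: "(y v = m v \<or> y v = - m v) \<and> m v \<noteq> 0" if "v extreme_point_of K" for v
  proof -
    have "(edg K)\<^sup>*\<^sup>* v p0" by (rule connected_vertices[OF K(1) that p0])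
    then show ?thesis
    proof (induction rule: converse_rtranclp_induct)
      case base
      then show ?case using y0 m0 m_def by simp
    next
      case (step a b)
      have e: "edg K b a" using step(1) by (rule edg_sym)
      have ya: "y a = rfl (b - a) (y b)" using y[OF e] .
      have ma: "m a = - rfl (b - a) (m b)" using mrel[OF e] .
      have "m a \<noteq> 0"
      proof
        assume "m a = 0"
        then have "rfl (b - a) (m b) = 0" using ma by simp
        then have "m b = 0" using rfl_inj[OF ne[OF e]] by blast
        then show False using step(3) by simp
      qed
      moreover have "y a = m a \<or> y a = - m a"
      proof -
        have "y b = m b \<or> y b = - m b" using step(3) by blast
        then show ?thesis
        proof
          assume "y b = m b"
          then have "y a = - m a" using ya ma by simp
          then show ?thesis by blast
        next
          assume "y b = - m b"
          then have "y a = m a" using ya ma by (simp add: rfl_neg_arg)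
          then show ?thesis by blast
        qed
      qed
      ultimately show ?case by blast
    qed
  qed
  define V where "V = {v. v extreme_point_of K}"
  define A where "A = {v \<in> V. y v = m v}"
  define B where "B = {v \<in> V. y v = - m v}"
  have AB1: "A \<union> B = V"
  proof
    show "A \<union> B \<subseteq> V" unfolding A_def B_def by blast
    show "V \<subseteq> A \<union> B"
    proof
      fix v assume "v \<in> V"
      then have "v extreme_point_of K" using V_def by simp
      then have "y v = m v \<or> y v = - m v" using claim by blast
      then show "v \<in> A \<union> B" using \<open>v \<in> V\<close> unfolding A_def B_def by blast
    qed
  qed
  have AB2: "A \<inter> B = {}"
  proof -
    have "y v \<noteq> - m v" if "v \<in> V" "y v = m v" for v
    proof
      assume "y v = - m v"
      with that(2) have "m v = - m v" by (rule trans[OF sym])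
      then have "m v + m v = 0" using eq_neg_iff_add_eq_0 by blast
      then have "(2::real) *\<^sub>R m v = 0" by (simp add: scaleR_2)
      then have "m v = 0" by simp
      then show False using claim that V_def by blast
    qed
    then show ?thesis
    proof -
      assume H: "\<And>v. v \<in> V \<Longrightarrow> y v = m v \<Longrightarrow> y v \<noteq> - m v"
      show ?thesis
      proof (rule equals0I)
        fix v assume "v \<in> A \<inter> B"
        then have "v \<in> V" "y v = m v" "y v = - m v" unfolding A_def B_def by blast+
        then show False using H by blast
      qed
    qed
  qed
  have alt: "z \<in> B" if "edg K x z" "x \<in> A" for x z
  proof -
    have "y z = rfl (x - z) (y x)" using y[OF that(1)] .
    also have "\<dots> = rfl (x - z) (m x)" using that(2) A_def by simp
    also have "\<dots> = - m z" using mrel[OF that(1)] by simp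
    finally show ?thesis using that(1) B_def V_def unfolding edg_def by simp
  qed
  have alt2: "z \<in> A" if "edg K x z" "x \<in> B" for x z
  proof -
    have "y z = rfl (x - z) (y x)" using y[OF that(1)] .
    also have "\<dots> = rfl (x - z) (- m x)" using that(2) B_def by simp
    also have "\<dots> = m z" using mrel[OF that(1)] by (simp add: rfl_neg_arg)
    finally show ?thesis using that(1) A_def V_def unfolding edg_def by simp
  qed
  have finV: "finite V" using poly_vert_finite[OF K(1)] V_def by simp
  have EV: "\<And>x y. edg K x y \<Longrightarrow> y \<in> V" unfolding edg_def V_def by simp
  have deg: "\<And>x. x \<in> V \<Longrightarrow> card {y. edg K x y} = 2" using deg_two[OF K] V_def by simp
  have "even (card V)"
    by (rule parity_count[OF finV EV edg_sym deg AB1 AB2 alt alt2])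
  then show False using od V_def by simp
qed

lemma edg_face:
  fixes F P :: "(real^3) set"
  assumes F: "F face_of P" and e: "edg F p q"
  shows "edg P p q"
  using e extreme_point_of_face[OF F] face_of_trans[OF _ F] unfolding edg_def by blast

lemma poly_has_vertex:
  fixes K :: "(real^3) set"
  assumes "polytope K" "K \<noteq> {}"
  obtains v where "v extreme_point_of K"
proof -
  have "{v. v extreme_point_of K} \<noteq> {}"
  proof
    assume "{v. v extreme_point_of K} = {}"
    then have "K = convex hull {}" using poly_hull[OF assms(1)] by simp
    then show False using assms(2) by simp
  qed
  then show ?thesis using that by blast
qed

lemma face_normal:
  fixes P F :: "(real^3) set"
  assumes P: "polytope P" "aff_dim P = 3" and F: "F face_of P" "aff_dim F = 2"
  obtains n b where "n \<noteq> 0" "\<And>x. x \<in> P \<Longrightarrow> n \<bullet> x \<le> b" "F = P \<inter> {x. n \<bullet> x = b}"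
proof -
  obtain n b where nb: "\<And>x. x \<in> P \<Longrightarrow> n \<bullet> x \<le> b" "F = P \<inter> {x. n \<bullet> x = b}"
    by (rule poly_exposed[OF P(1) F(1)]) blast
  have "n \<noteq> 0"
  proof
    assume n0: "n = 0"
    show False
    proof (cases "b = 0")
      case True
      then have "F = P" using nb(2) n0 by auto
      then show False using P(2) F(2) by simp
    next
      case False
      then have "F = {}" using nb(2) n0 by auto
      then show False using F(2) by simp
    qed
  qed
  then show ?thesis using that nb by blast
qed

lemma cross_nonzero:
  fixes n w e :: "real^3"
  assumes n: "n \<noteq> 0" and ne: "n \<bullet> e = 0" and we: "w \<bullet> e \<noteq> 0"
  shows "cross3 n w \<noteq> 0"
proof
  assume c: "cross3 n w = 0"
  have "(n \<bullet> w) *\<^sub>R n - (n \<bullet> n) *\<^sub>R w = 0" using cross_cross[of n w] c by simp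
  then have "((n \<bullet> w) *\<^sub>R n - (n \<bullet> n) *\<^sub>R w) \<bullet> e = 0" by simp
  then have "(n \<bullet> n) * (w \<bullet> e) = 0" using ne by (simp add: inner_diff_left)
  then show False using n we by simp
qed

lemma Lset_subspace: "subspace {x p0 | x. x \<in> Lset P}"
  unfolding subspace_def
proof (intro conjI ballI allI)
  show "0 \<in> {x p0 | x. x \<in> Lset P}"
    by (rule CollectI, rule exI[of _ "\<lambda>_. 0"]) (simp add: Lset_def)
next
  fix u v assume u: "u \<in> {x p0 | x. x \<in> Lset P}" and v: "v \<in> {x p0 | x. x \<in> Lset P}"
  obtain x where x: "u = x p0" "x \<in> Lset P" using u by blast
  obtain y where y: "v = y p0" "y \<in> Lset P" using v by blast
  have "(\<lambda>p. x p + y p) \<in> Lset P" using x(2) y(2) unfolding Lset_def by (simp add: rfl_add)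
  then show "u + v \<in> {x p0 | x. x \<in> Lset P}" using x y by force
next
  fix c :: real and u assume u: "u \<in> {x p0 | x. x \<in> Lset P}"
  obtain x where x: "u = x p0" "x \<in> Lset P" using u by blast
  have "(\<lambda>p. c *\<^sub>R x p) \<in> Lset P" using x(2) unfolding Lset_def by (simp add: rfl_scale)
  then show "c *\<^sub>R u \<in> {x p0 | x. x \<in> Lset P}" using x by force
qed

lemma w0_facts:
  fixes P Q :: "(real^3) set"
  assumes P: "polytope P" and Q: "Q \<in> InCone P" and e: "edg P p q"
  shows "wmap Q P q = rfl (p - q) (wmap Q P p)" "wmap Q P p \<bullet> (p - q) \<noteq> 0"
proof -
  show eq: "wmap Q P q = rfl (p - q) (wmap Q P p)" using wmap_L[OF P Q] e unfolding Lset_def by blast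
  have p: "p extreme_point_of P" "q extreme_point_of P" "p \<noteq> q" using e unfolding edg_def by auto
  have ne: "wmap Q P p \<noteq> wmap Q P q" by (rule wmap_distinct[OF P InCone_D(2)[OF Q] p])
  show "wmap Q P p \<bullet> (p - q) \<noteq> 0"
  proof
    assume "wmap Q P p \<bullet> (p - q) = 0"
    then have "rfl (p - q) (wmap Q P p) = wmap Q P p" by (simp add: rfl_def)
    then show False using eq ne by simp
  qed
qed

lemma odd_face_bound:
  fixes P F :: "(real^3) set"
  assumes P: "polytope P" "aff_dim P = 3" and IC: "InCone P \<noteq> {}"
    and F: "F face_of P" "aff_dim F = 2" "odd (vertex_count F)"
    and S: "S \<subseteq> support_fun ` InCone P" "lin_indep_funs S"
  shows "card S \<le> 2"
proof (rule ccontr)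
  assume "\<not> card S \<le> 2"
  then have c3: "card S \<ge> 3" by simp
  have Pne: "P \<noteq> {}" using P(2) by auto
  obtain Q0 where Q0: "Q0 \<in> InCone P" using IC by blast
  define w0 where "w0 = wmap Q0 P"
  have Fpoly: "polytope F" by (rule face_of_polytope_polytope[OF P(1) F(1)])
  have Fne: "F \<noteq> {}" using F(2) by auto
  obtain p0 where p0: "p0 extreme_point_of F" by (rule poly_has_vertex[OF Fpoly Fne])
  have c2: "card {w. edg F p0 w} = 2" by (rule deg_two[OF Fpoly F(2) p0])
  have "{w. edg F p0 w} \<noteq> {}"
  proof
    assume h: "{w. edg F p0 w} = {}"
    show False using c2 unfolding h by simp
  qed
  then obtain q0 where eF: "edg F p0 q0" by blast
  have eP: "edg P p0 q0" by (rule edg_face[OF F(1) eF])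
  have p0P: "p0 extreme_point_of P" using eP unfolding edg_def by blast
  obtain n b where nb: "n \<noteq> 0" "\<And>x. x \<in> P \<Longrightarrow> n \<bullet> x \<le> b" "F = P \<inter> {x. n \<bullet> x = b}"
    by (rule face_normal[OF P F(1) F(2)]) blast
  have nF: "n \<bullet> u = n \<bullet> v" if "u \<in> F" "v \<in> F" for u v
  proof -
    have "n \<bullet> u = b" "n \<bullet> v = b" using that nb(3) by auto
    then show ?thesis by simp
  qed
  have w0F: "w0 q = rfl (p - q) (w0 p)" if "edg F p q" for p q
    using w0_facts(1)[OF P(1) Q0 edg_face[OF F(1) that]] w0_def by simp
  have "p0 \<in> F" "q0 \<in> F" using eF ext_in unfolding edg_def by blast+
  then have "n \<bullet> p0 = n \<bullet> q0" by (rule nF)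
  then have ne: "n \<bullet> (p0 - q0) = 0" by (simp add: inner_diff_right)
  have m0: "cross3 n (w0 p0) \<noteq> 0"
    using cross_nonzero[OF nb(1) ne] w0_facts(2)[OF P(1) Q0 eP] w0_def by simp
  obtain B where B: "independent B" "card B = card S" "B \<subseteq> {x p0 | x. x \<in> Lset P}"
    by (rule main_bound[OF P(1) Pne p0P S])
  have "dim (UNIV :: (real^3) set) \<le> card B" using B(2) c3 by simp
  then have "UNIV \<subseteq> span B" using card_ge_dim_independent[of B UNIV] B(1) by simp
  also have "span B \<subseteq> {x p0 | x. x \<in> Lset P}" by (rule span_minimal[OF B(3) Lset_subspace])
  finally have "cross3 n (w0 p0) \<in> {x p0 | x. x \<in> Lset P}" by blast
  then obtain x where x1: "x \<in> Lset P" and x2': "cross3 n (w0 p0) = x p0" by auto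
  note x = x1 x2'[symmetric]
  have xF: "x q = rfl (p - q) (x p)" if "edg F p q" for p q
    using x(1) edg_face[OF F(1) that] unfolding Lset_def by blast
  have "x p0 \<noteq> cross3 n (w0 p0)"
    by (rule parity[OF Fpoly F(2) _ nF w0F xF p0 m0]) (use F(3) in \<open>simp add: vertex_count_def\<close>)
  then show False using x(2) by simp
qed

lemma face_decomp:
  fixes K :: "(real^3) set" and n :: "real^3" and w0 x :: "real^3 \<Rightarrow> real^3"
  assumes K: "polytope K" "aff_dim K = 2" and od: "odd (card {v. v extreme_point_of K})"
    and n: "\<And>u v. u \<in> K \<Longrightarrow> v \<in> K \<Longrightarrow> n \<bullet> u = n \<bullet> v"
    and w0: "\<And>p q. edg K p q \<Longrightarrow> w0 q = rfl (p - q) (w0 p)"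
    and x: "\<And>p q. edg K p q \<Longrightarrow> x q = rfl (p - q) (x p)"
    and p0: "p0 extreme_point_of K" and m0: "cross3 n (w0 p0) \<noteq> 0"
  shows "\<exists>\<alpha> \<beta>. x p0 = \<alpha> *\<^sub>R n + \<beta> *\<^sub>R w0 p0"
proof -
  define m where "m = cross3 n (w0 p0)"
  define c1 where "c1 = cross3 (x p0) (w0 p0) \<bullet> m"
  define c2 where "c2 = cross3 n (x p0) \<bullet> m"
  define c3 where "c3 = x p0 \<bullet> m"
  have mm: "m \<bullet> m \<noteq> 0" using m0 m_def by simp
  have ex: "(m \<bullet> m) *\<^sub>R x p0 = c1 *\<^sub>R n + c2 *\<^sub>R w0 p0 + c3 *\<^sub>R m"
    using expand3[of n "w0 p0" "x p0"] unfolding m_def c1_def c2_def c3_def .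
  have nperp: "n \<bullet> (p - q) = 0" if "edg K p q" for p q
  proof -
    have "p extreme_point_of K" "q extreme_point_of K" using that unfolding edg_def by simp_all
    then have "p \<in> K" "q \<in> K" using ext_in by blast+
    then have "n \<bullet> p = n \<bullet> q" by (rule n)
    then show ?thesis by (simp add: inner_diff_right)
  qed
  have c30: "c3 = 0"
  proof (rule ccontr)
    assume c3: "c3 \<noteq> 0"
    define y where "y v = (1/c3) *\<^sub>R ((m \<bullet> m) *\<^sub>R x v - c1 *\<^sub>R n - c2 *\<^sub>R w0 v)" for v
    have yrel: "y q = rfl (p - q) (y p)" if e: "edg K p q" for p q
    proof -
      have "rfl (p - q) n = n" by (rule rfl_fix[OF nperp[OF e]])
      then show ?thesis unfolding y_def x[OF e] w0[OF e] by (simp add: rfl_scale rfl_diff)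
    qed
    have "(m \<bullet> m) *\<^sub>R x p0 - c1 *\<^sub>R n - c2 *\<^sub>R w0 p0 = c3 *\<^sub>R m" using ex by (simp add: algebra_simps)
    then have "y p0 = m" using c3 by (simp add: y_def)
    moreover have "y p0 \<noteq> cross3 n (w0 p0)" by (rule parity[OF K od n w0 yrel p0 m0])
    ultimately show False using m_def by simp
  qed
  then have "(m \<bullet> m) *\<^sub>R x p0 = c1 *\<^sub>R n + c2 *\<^sub>R w0 p0" using ex by simp
  then have "(1 / (m \<bullet> m)) *\<^sub>R ((m \<bullet> m) *\<^sub>R x p0) = (1 / (m \<bullet> m)) *\<^sub>R (c1 *\<^sub>R n + c2 *\<^sub>R w0 p0)" by simp
  then have "x p0 = (c1 / (m \<bullet> m)) *\<^sub>R n + (c2 / (m \<bullet> m)) *\<^sub>R w0 p0" using mm by (simp add: scaleR_add_right)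
  then show ?thesis by blast
qed

lemma same_normal:
  fixes nF nG :: "real^3"
  assumes F: "F = P \<inter> {x. nF \<bullet> x = bF}" and G: "G = P \<inter> {x. nG \<bullet> x = bG}"
    and p: "p \<in> F" "p \<in> G" and k: "nF = k *\<^sub>R nG" "nF \<noteq> 0"
  shows "F = G"
proof -
  have k0: "k \<noteq> 0" using k by auto
  have "bF = nF \<bullet> p" "bG = nG \<bullet> p" using p F G by auto
  then have bk: "bF = k * bG" using k(1) by simp
  have "nF \<bullet> x = bF \<longleftrightarrow> nG \<bullet> x = bG" for x using k0 bk k(1) by auto
  then show ?thesis using F G by auto
qed

lemma two_odd_bound:
  fixes P F G :: "(real^3) set"
  assumes P: "polytope P" "aff_dim P = 3" and IC: "InCone P \<noteq> {}"
    and F: "F face_of P" "aff_dim F = 2" "odd (vertex_count F)"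
    and G: "G face_of P" "aff_dim G = 2" "odd (vertex_count G)"
    and FG: "F \<noteq> G" "aff_dim (F \<inter> G) = 1"
    and S: "S \<subseteq> support_fun ` InCone P" "lin_indep_funs S"
  shows "card S \<le> 1"
proof -
  have Pne: "P \<noteq> {}" using P(2) by auto
  obtain Q0 where Q0: "Q0 \<in> InCone P" using IC by blast
  define w0 where "w0 = wmap Q0 P"
  define E where "E = F \<inter> G"
  have EP: "E face_of P" unfolding E_def by (rule face_of_Int[OF F(1) G(1)])
  have Epoly: "polytope E" by (rule face_of_polytope_polytope[OF P(1) EP])
  have Ene: "E \<noteq> {}" using FG(2) E_def by auto
  have "collinear E" unfolding collinear_aff_dim E_def using FG(2) by simp
  then obtain p0 q0 where pq: "E = closed_segment p0 q0"
    using compact_convex_collinear_segment[OF Ene polytope_imp_compact[OF Epoly] polytope_imp_convex[OF Epoly]]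
    by blast
  have pq0: "p0 \<noteq> q0"
  proof
    assume "p0 = q0"
    then have "E = {p0}" using pq by simp
    then show False using FG(2) E_def by simp
  qed
  have FP: "F \<subseteq> P" "G \<subseteq> P" using F(1) G(1) face_of_imp_subset by blast+
  have EF: "E face_of F" by (rule face_of_subset[OF EP]) (use FP E_def in auto)
  have EG: "E face_of G" by (rule face_of_subset[OF EP]) (use FP E_def in auto)
  have pE: "p0 extreme_point_of E" "q0 extreme_point_of E"
    unfolding pq by (simp_all add: extreme_point_of_segment)
  have eF: "edg F p0 q0" unfolding edg_def
    using pE extreme_point_of_face[OF EF] EF pq pq0 by auto
  have eG: "edg G p0 q0" unfolding edg_def
    using pE extreme_point_of_face[OF EG] EG pq pq0 by auto
  have eP: "edg P p0 q0" by (rule edg_face[OF F(1) eF])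
  have p0P: "p0 extreme_point_of P" using eP unfolding edg_def by blast
  have Fpoly: "polytope F" by (rule face_of_polytope_polytope[OF P(1) F(1)])
  have Gpoly: "polytope G" by (rule face_of_polytope_polytope[OF P(1) G(1)])
  obtain nF bF where nbF: "nF \<noteq> 0" "\<And>x. x \<in> P \<Longrightarrow> nF \<bullet> x \<le> bF" "F = P \<inter> {x. nF \<bullet> x = bF}"
    by (rule face_normal[OF P F(1) F(2)]) blast
  obtain nG bG where nbG: "nG \<noteq> 0" "\<And>x. x \<in> P \<Longrightarrow> nG \<bullet> x \<le> bG" "G = P \<inter> {x. nG \<bullet> x = bG}"
    by (rule face_normal[OF P G(1) G(2)]) blast
  have nFc: "nF \<bullet> u = nF \<bullet> v" if "u \<in> F" "v \<in> F" for u v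
  proof -
    have "nF \<bullet> u = bF" "nF \<bullet> v = bF" using that nbF(3) by auto
    then show ?thesis by simp
  qed
  have nGc: "nG \<bullet> u = nG \<bullet> v" if "u \<in> G" "v \<in> G" for u v
  proof -
    have "nG \<bullet> u = bG" "nG \<bullet> v = bG" using that nbG(3) by auto
    then show ?thesis by simp
  qed
  have pqF: "p0 \<in> F" "q0 \<in> F" "p0 \<in> G" "q0 \<in> G" using pq E_def ends_in_segment by blast+
  define e where "e = p0 - q0"
  have nFe: "nF \<bullet> e = 0"
  proof -
    have "nF \<bullet> p0 = nF \<bullet> q0" by (rule nFc[OF pqF(1,2)])
    then show ?thesis by (simp add: e_def inner_diff_right)
  qed
  have nGe: "nG \<bullet> e = 0"
  proof -
    have "nG \<bullet> p0 = nG \<bullet> q0" by (rule nGc[OF pqF(3,4)])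
    then show ?thesis by (simp add: e_def inner_diff_right)
  qed
  define w where "w = w0 p0"
  have we: "w \<bullet> e \<noteq> 0" using w0_facts(2)[OF P(1) Q0 eP] w_def w0_def e_def by simp
  have mF: "cross3 nF (w0 p0) \<noteq> 0" using cross_nonzero[OF nbF(1) nFe we] w_def by simp
  have mG: "cross3 nG (w0 p0) \<noteq> 0" using cross_nonzero[OF nbG(1) nGe we] w_def by simp
  have w0F: "w0 q = rfl (p - q) (w0 p)" if "edg F p q" for p q
    using w0_facts(1)[OF P(1) Q0 edg_face[OF F(1) that]] w0_def by simp
  have w0G: "w0 q = rfl (p - q) (w0 p)" if "edg G p q" for p q
    using w0_facts(1)[OF P(1) Q0 edg_face[OF G(1) that]] w0_def by simp
  have p0F: "p0 extreme_point_of F" "p0 extreme_point_of G" using eF eG unfolding edg_def by auto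
  have oddF: "odd (card {v. v extreme_point_of F})" using F(3) by (simp add: vertex_count_def)
  have oddG: "odd (card {v. v extreme_point_of G})" using G(3) by (simp add: vertex_count_def)
  have inspan: "x p0 \<in> span {w}" if xL: "x \<in> Lset P" for x
  proof -
    have xF: "x q = rfl (p - q) (x p)" if "edg F p q" for p q
      using xL edg_face[OF F(1) that] unfolding Lset_def by blast
    have xG: "x q = rfl (p - q) (x p)" if "edg G p q" for p q
      using xL edg_face[OF G(1) that] unfolding Lset_def by blast
    obtain \<alpha> \<beta> where ab: "x p0 = \<alpha> *\<^sub>R nF + \<beta> *\<^sub>R w"
      using face_decomp[OF Fpoly F(2) oddF nFc w0F xF p0F(1) mF] w_def by blast
    obtain \<alpha>' \<beta>' where ab': "x p0 = \<alpha>' *\<^sub>R nG + \<beta>' *\<^sub>R w"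
      using face_decomp[OF Gpoly G(2) oddG nGc w0G xG p0F(2) mG] w_def by blast
    have "x p0 \<bullet> e = \<beta> * (w \<bullet> e)" using ab nFe by (simp add: inner_add_left)
    moreover have "x p0 \<bullet> e = \<beta>' * (w \<bullet> e)" using ab' nGe by (simp add: inner_add_left)
    ultimately have bb: "\<beta> = \<beta>'" using we by simp
    then have eqn: "\<alpha> *\<^sub>R nF = \<alpha>' *\<^sub>R nG" using ab ab' by simp
    have a0: "\<alpha> = 0"
    proof (rule ccontr)
      assume a: "\<alpha> \<noteq> 0"
      have "nF = (\<alpha>' / \<alpha>) *\<^sub>R nG"
      proof -
        have "(1/\<alpha>) *\<^sub>R (\<alpha> *\<^sub>R nF) = (1/\<alpha>) *\<^sub>R (\<alpha>' *\<^sub>R nG)" using eqn by simp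
        then show ?thesis using a by simp
      qed
      then have "F = G" using same_normal[OF nbF(3) nbG(3) pqF(1) pqF(3) _ nbF(1)] by blast
      then show False using FG(1) by simp
    qed
    then have "x p0 = \<beta> *\<^sub>R w" using ab by simp
    then show ?thesis by (simp add: span_base span_scale)
  qed
  obtain B where B: "independent B" "card B = card S" "B \<subseteq> {x p0 | x. x \<in> Lset P}"
    by (rule main_bound[OF P(1) Pne p0P S])
  have "B \<subseteq> span {w}" using B(3) inspan by blast
  then have "card B \<le> dim (span {w})" using independent_card_le_dim B(1) by blast
  also have "\<dots> \<le> 1" by simp
  finally show ?thesis using B(2) by simp
qed

lemma lower_bound:
  fixes P Q0 :: "(real^3) set"
  assumes P: "polytope P" "P \<noteq> {}" and Q0: "Q0 \<in> InCone P"
  shows "lin_indep_funs {support_fun Q0}"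
proof -
  obtain p where p: "p extreme_point_of P" by (rule poly_has_vertex[OF P])
  obtain \<delta> c where c: "\<delta> > 0" "ball c \<delta> \<subseteq> normal_cone P {p}"
    "\<And>x. x \<in> P \<Longrightarrow> x \<noteq> p \<Longrightarrow> c \<bullet> x < c \<bullet> p" by (rule ball_normal[OF P(1) p]) blast
  define W where "W = wmap Q0 P p"
  have fan: "normal_fan Q0 = normal_fan P" using InCone_D(2)[OF Q0] .
  obtain r where r: "r > 0" "\<And>v. v extreme_point_of Q0 \<Longrightarrow> norm v = r" using InCone_D(3)[OF Q0] by blast
  have "norm W = r" using r(2) wmap_prop(1)[OF P(1) fan p] W_def by simp
  then have W0: "W \<noteq> 0" using r(1) by auto
  have "\<exists>u. support_fun Q0 u \<noteq> 0"
  proof (rule ccontr)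
    assume "\<not> (\<exists>u. support_fun Q0 u \<noteq> 0)"
    then have z: "\<And>u. support_fun Q0 u = 0" by simp
    have "u \<bullet> W = 0" if u: "u \<in> ball c \<delta>" for u
    proof -
      have "u \<in> normal_cone P {p}" using c(2) u by (rule subsetD)
      then have "\<And>y. y \<in> P \<Longrightarrow> u \<bullet> y \<le> u \<bullet> p" by (simp add: normal_cone_def)
      then have "support_fun Q0 u = u \<bullet> W" using support_at_vertex[OF P(1) fan p] W_def by blast
      then show ?thesis using z by simp
    qed
    then have "W = 0" by (rule ball_orth[OF c(1)])
    then show False using W0 by simp
  qed
  then obtain u where u: "support_fun Q0 u \<noteq> 0" by blast
  show ?thesis unfolding lin_indep_funs_def
  proof (intro conjI allI impI ballI)
    show "finite {support_fun Q0}" by simp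
    fix cc f assume h: "\<forall>x. (\<Sum>f\<in>{support_fun Q0}. cc f * f x) = 0" and f: "f \<in> {support_fun Q0}"
    have "(\<Sum>f\<in>{support_fun Q0}. cc f * f u) = 0" using h by (rule spec)
    then have "cc (support_fun Q0) * support_fun Q0 u = 0" by simp
    then show "cc f = 0" using u f by simp
  qed
qed

lemma incone_dim_le:
  assumes "\<And>S. S \<subseteq> support_fun ` InCone P \<Longrightarrow> lin_indep_funs S \<Longrightarrow> card S \<le> k"
  shows "incone_dim P \<le> k"
proof -
  define M where "M = {card S | S. S \<subseteq> support_fun ` InCone P \<and> lin_indep_funs S}"
  have Mk: "M \<subseteq> {..k}" using assms M_def by auto
  then have finM: "finite M" by (rule finite_subset) simp
  have "lin_indep_funs ({} :: (real^3 \<Rightarrow> real) set)" by (simp add: lin_indep_funs_def)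
  then have "0 \<in> M" unfolding M_def by force
  then have "M \<noteq> {}" by blast
  then have "Max M \<le> k" using finM Mk by (simp add: Max_le_iff subset_eq)
  then show ?thesis unfolding incone_dim_def M_def .
qed

theorem corollary4p6:
  fixes P :: "(real^3) set"
  assumes "polytope P" and "aff_dim P = 3" and "InCone P \<noteq> {}"
  shows "((\<exists>F. F face_of P \<and> aff_dim F = 2 \<and> odd (vertex_count F)) \<longrightarrow> incone_dim P \<le> 2)
    \<and> ((\<exists>F G. F face_of P \<and> G face_of P \<and> F \<noteq> G \<and> aff_dim F = 2 \<and> aff_dim G = 2 \<and>
            odd (vertex_count F) \<and> odd (vertex_count G) \<and> aff_dim (F \<inter> G) = 1)
         \<longrightarrow> incone_dim P = 1)"
proof (intro conjI impI)
  assume "\<exists>F. F face_of P \<and> aff_dim F = 2 \<and> odd (vertex_count F)"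
  then obtain F where F: "F face_of P" "aff_dim F = 2" "odd (vertex_count F)" by blast
  show "incone_dim P \<le> 2"
    by (rule incone_dim_le) (rule odd_face_bound[OF assms(1,2,3) F])
next
  assume "\<exists>F G. F face_of P \<and> G face_of P \<and> F \<noteq> G \<and> aff_dim F = 2 \<and> aff_dim G = 2 \<and>
            odd (vertex_count F) \<and> odd (vertex_count G) \<and> aff_dim (F \<inter> G) = 1"
  then obtain F G where FG: "F face_of P" "G face_of P" "F \<noteq> G" "aff_dim F = 2" "aff_dim G = 2"
      "odd (vertex_count F)" "odd (vertex_count G)" "aff_dim (F \<inter> G) = 1" by blast
  have bnd: "card S \<le> 1" if "S \<subseteq> support_fun ` InCone P" "lin_indep_funs S" for S
    by (rule two_odd_bound[OF assms(1,2,3) FG(1) FG(4) FG(6) FG(2) FG(5) FG(7) FG(3) FG(8) that])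
  define M where "M = {card S | S. S \<subseteq> support_fun ` InCone P \<and> lin_indep_funs S}"
  have "M \<subseteq> {..1}" using bnd M_def by auto
  then have finM: "finite M" by (rule finite_subset) simp
  obtain Q0 where Q0: "Q0 \<in> InCone P" using assms(3) by blast
  have Pne: "P \<noteq> {}" using assms(2) by auto
  have "lin_indep_funs {support_fun Q0}" by (rule lower_bound[OF assms(1) Pne Q0])
  moreover have "{support_fun Q0} \<subseteq> support_fun ` InCone P" using Q0 by blast
  ultimately have "card {support_fun Q0} \<in> M" unfolding M_def by blast
  then have "1 \<in> M" by simp
  then have ge: "1 \<le> Max M" using finM by simp
  have le: "incone_dim P \<le> 1" by (rule incone_dim_le) (rule bnd)
  show "incone_dim P = 1" using ge le unfolding incone_dim_def M_def by simp
qed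

end
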